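(* Let $\mathcal{FT}$ be the free nonsymmetric operad generated by five ternary operations $\omega_1,\dots,\omega_5$, written $\omega_i=(x,y,z)_i$, and let $d\colon\mathcal{FT}\to\mathcal{D}$ be the operad morphism into the dendriform operad defined on generators by \[ (x,y,z)_1\mapsto x\succ(y\prec z),\quad (x,y,z)_2\mapsto x\prec(y\prec z),\quad (x,y,z)_3\mapsto x\prec(y\succ z), \] \[ (x,y,z)_4\mapsto (x\succ y)\succ z,\quad (x,y,z)_5\mapsto (x\prec y)\succ z . \] (Its image is the Veronese square $\mathcal{D}^{[2]}$, the suboperad of $\mathcal{D}$ generated by $\mathcal{D}(3)$.) Then the kernel of the restriction $d\colon\mathcal{FT}(5)\to\mathcal{D}(5)$ (the space of quadratic relations satisfied by the five generating operations of $\mathcal{D}^{[2]}$) has dimension $33$, and the following 33 elements of $\mathcal{FT}(5)$ form a basis of it; i.e. every quadratic relation satisfied by the five generators is a linear combination of: \begin{align*} &((v,w,x)_4,y,z)_2 - (v,w,(x,y,z)_2)_4,\\ &((v,w,x)_5,y,z)_2 - (v,w,(x,y,z)_2)_5,\\ &((v,w,x)_4,y,z)_3 - (v,w,(x,y,z)_3)_4,\\ &((v,w,x)_5,y,z)_3 - (v,w,(x,y,z)_3)_5,\\ &((v,w,x)_1,y,z)_1 + ((v,w,x)_2,y,z)_1 - (v,(w,x,y)_5,z)_1,\\ &(v,(w,x,y)_1,z)_3 + (v,(w,x,y)_2,z)_3 - (v,w,(x,y,z)_5)_3,\\ &((v,w,x)_1,y,z)_4 + ((v,w,x)_2,y,z)_4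 - (v,(w,x,y)_5,z)_4,\\ &((v,w,x)_1,y,z)_1 + ((v,w,x)_4,y,z)_1 - (v,w,(x,y,z)_1)_4,\\ &(v,(w,x,y)_4,z)_2 + (v,(w,x,y)_5,z)_2 - (v,w,(x,y,z)_1)_3,\\ &((v,w,x)_4,y,z)_5 + ((v,w,x)_5,y,z)_5 - (v,(w,x,y)_1,z)_4,\\ &((v,w,x)_4,y,z)_5 + (v,(w,x,y)_2,z)_4 - (v,w,(x,y,z)_5)_4,\\ &(v,(w,x,y)_3,z)_1 - (v,w,(x,y,z)_1)_1 - (v,w,(x,y,z)_4)_1,\\ &(v,(w,x,y)_3,z)_2 - (v,w,(x,y,z)_1)_2 - (v,w,(x,y,z)_4)_2,\\ &((v,w,x)_3,y,z)_5 - (v,(w,x,y)_1,z)_5 - (v,(w,x,y)_4,z)_5,\\ &((v,w,x)_1,y,z)_2 - (v,w,(x,y,z)_1)_1 - (v,w,(x,y,z)_2)_1,\\ &((v,w,x)_3,y,z)_2 - (v,(w,x,y)_4,z)_2 - (v,w,(x,y,z)_2)_3,\\ &(v,(w,x,y)_1,z)_2 - (v,w,(x,y,z)_2)_3 - (v,w,(x,y,z)_3)_3,\\ &((v,w,x)_1,y,z)_5 - (v,(w,x,y)_2,z)_4 - (v,(w,x,y)_3,z)_4,\\ &(v,(w,x,y)_2,z)_1 - (v,w,(x,y,z)_2)_1 - (v,w,(x,y,z)_3)_1 - (v,w,(x,y,z)_5)_1,\\ &((v,w,x)_2,y,z)_2 - (v,(w,x,y)_5,z)_2 - (v,w,(x,y,z)_1)_2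 - (v,w,(x,y,z)_2)_2,\\ &(v,(w,x,y)_2,z)_2 - (v,w,(x,y,z)_2)_2 - (v,w,(x,y,z)_3)_2 - (v,w,(x,y,z)_5)_2,\\ &((v,w,x)_3,y,z)_3 - (v,(w,x,y)_1,z)_3 - (v,(w,x,y)_4,z)_3 - (v,w,(x,y,z)_3)_3,\\ &(v,(w,x,y)_3,z)_3 + (v,(w,x,y)_4,z)_3 + (v,(w,x,y)_5,z)_3 - (v,w,(x,y,z)_4)_3,\\ &((v,w,x)_3,y,z)_4 + ((v,w,x)_4,y,z)_4 + ((v,w,x)_5,y,z)_4 - (v,(w,x,y)_4,z)_4,\\ &((v,w,x)_1,y,z)_4 + ((v,w,x)_4,y,z)_4 + (v,(w,x,y)_3,z)_4 - (v,w,(x,y,z)_4)_4,\\ &((v,w,x)_2,y,z)_5 - (v,(w,x,y)_2,z)_5 - (v,(w,x,y)_3,z)_5 - (v,(w,x,y)_5,z)_5,\\ &((v,w,x)_5,y,z)_5 + (v,(w,x,y)_1,z)_5 + (v,(w,x,y)_2,z)_5 - (v,w,(x,y,z)_5)_5,\\ &((v,w,x)_2,y,z)_1 + ((v,w,x)_3,y,z)_1 + ((v,w,x)_5,y,z)_1 - (v,w,(x,y,z)_1)_5,\\ &(v,(w,x,y)_4,z)_1 + (v,(w,x,y)_5,z)_1 - (v,w,(x,y,z)_1)_4 - (v,w,(x,y,z)_1)_5,\\ &((v,w,x)_1,y,z)_3 - (v,(w,x,y)_2,z)_1 + (v,w,(x,y,z)_2)_1 - (v,w,(x,y,z)_4)_1,\\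 &(v,(w,x,y)_1,z)_1 - (v,w,(x,y,z)_2)_4 - (v,w,(x,y,z)_2)_5 - (v,w,(x,y,z)_3)_4 - (v,w,(x,y,z)_3)_5,\\ &((v,w,x)_2,y,z)_3 - (v,(w,x,y)_2,z)_2 - (v,(w,x,y)_2,z)_3 + (v,(w,x,y)_4,z)_3\\ &\qquad + (v,w,(x,y,z)_2)_2 - (v,w,(x,y,z)_4)_2 - (v,w,(x,y,z)_4)_3,\\ &((v,w,x)_2,y,z)_4 + ((v,w,x)_2,y,z)_5 - ((v,w,x)_4,y,z)_4 - (v,(w,x,y)_2,z)_5\\ &\qquad + (v,(w,x,y)_4,z)_4 + (v,(w,x,y)_4,z)_5 - (v,w,(x,y,z)_4)_5. \end{align*}
   Context: All operads are nonsymmetric, arity-graded, over a field of characteristic $0$ (e.g. $\mathbb{Q}$). The dendriform operad $\mathcal{D}$ is the nonsymmetric operad generated by two binary operations $\prec,\succ$ subject to \[ (x\succ y)\prec z = x\succ(y\prec z),\quad (x\prec y)\prec z = x\prec(y\prec z)+x\prec(y\succ z),\quad x\succ(y\succ z)=(x\succ y)\succ z+(x\prec y)\succ z . \] In $\mathcal{FT}$, the arity-5 component $\mathcal{FT}(5)$ has dimension 75 with basis the monomials $\omega_j\circ_k\omega_i$ ($1\le i,j\le5$, $k=1,2,3$), written with the variables $v,w,x,y,z$ in fixed left-to-right order as \[ ((v,w,x)_i,y,z)_j=\omega_j\circ_1\omega_i,\qquad (v,(w,x,y)_i,z)_j=\omega_j\circ_2\omega_i,\qquad (v,w,(x,y,z)_i)_j=\omega_j\circ_3\omega_i,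 \] where $\circ_k$ denotes partial composition into the $k$-th input. A relation is an element of $\mathcal{FT}(5)$ mapped to $0$ by $d$ (meaning the corresponding identity holds in every dendriform algebra, e.g. $((v,w,x)_4,y,z)_2\mapsto ((v\succ w)\succ x)\prec(y\prec z)$). *)

theory Defs
  imports Main "HOL-Library.Poly_Mapping"
begin

datatype gen = W1 | W2 | W3 | W4 | W5

text \<open>Planar ternary trees; leaves stand for the inputs in left-to-right order
  (nonsymmetric operad, so the variables are implicit).  A tree with n leaves is
  a monomial of FT(n).\<close>
datatype ttree = TLeaf | TNode gen ttree ttree ttree

fun tarity :: "ttree \<Rightarrow> nat" where
  "tarity TLeaf = 1"
| "tarity (TNode g a b c) = tarity a + tarity b + tarity c"

type_synonym 'k ft = "ttree \<Rightarrow>\<^sub>0 'k"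

definition FT5 :: "('k::field_char_0) ft set" where
  "FT5 = {c. \<forall>t \<in> Poly_Mapping.keys c. tarity t = 5}"

datatype dop = Prec | Succ

datatype btree = BLeaf | BNode dop btree btree

type_synonym 'k bt = "btree \<Rightarrow>\<^sub>0 'k"

definition smul :: "'k::field_char_0 \<Rightarrow> ('a \<Rightarrow>\<^sub>0 'k) \<Rightarrow> ('a \<Rightarrow>\<^sub>0 'k)" where
  "smul r p = Poly_Mapping.map (\<lambda>x. r * x) p"

definition mon :: "'a \<Rightarrow> ('a \<Rightarrow>\<^sub>0 'k::field_char_0)" where
  "mon t = Poly_Mapping.single t 1"

abbreviation prec :: "btree \<Rightarrow> btree \<Rightarrow> btree" where "prec a b \<equiv> BNode Prec a b"
abbreviation succ :: "btree \<Rightarrow> btree \<Rightarrow> btree" where "succ a b \<equiv> BNode Succ a b"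

definition graft_left :: "dop \<Rightarrow> ('k::field_char_0) bt \<Rightarrow> btree \<Rightarrow> 'k bt" where
  "graft_left opr p t = (\<Sum>s\<in>Poly_Mapping.keys p. Poly_Mapping.single (BNode opr s t) (Poly_Mapping.lookup p s))"

definition graft_right :: "dop \<Rightarrow> btree \<Rightarrow> ('k::field_char_0) bt \<Rightarrow> 'k bt" where
  "graft_right opr t p = (\<Sum>s\<in>Poly_Mapping.keys p. Poly_Mapping.single (BNode opr t s) (Poly_Mapping.lookup p s))"

definition dend_rel1 :: "btree \<Rightarrow> btree \<Rightarrow> btree \<Rightarrow> ('k::field_char_0) bt" where
  "dend_rel1 a b c = mon (prec (succ a b) c) - mon (succ a (prec b c))"

definition dend_rel2 :: "btree \<Rightarrow> btree \<Rightarrow> btree \<Rightarrow> ('k::field_char_0) bt" where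
  "dend_rel2 a b c = mon (prec (prec a b) c) - mon (prec a (prec b c)) - mon (prec a (succ b c))"

definition dend_rel3 :: "btree \<Rightarrow> btree \<Rightarrow> btree \<Rightarrow> ('k::field_char_0) bt" where
  "dend_rel3 a b c = mon (succ a (succ b c)) - mon (succ (succ a b) c) - mon (succ (prec a b) c)"

text \<open>The operadic ideal generated by the dendriform relations; the dendriform
  operad D is the quotient of the free operad by this ideal.\<close>
inductive_set dend_ideal :: "('k::field_char_0) bt set" where
  rel1: "dend_rel1 a b c \<in> dend_ideal"
| rel2: "dend_rel2 a b c \<in> dend_ideal"
| rel3: "dend_rel3 a b c \<in> dend_ideal"
| zero: "0 \<in> dend_ideal"
| add: "p \<in> dend_ideal \<Longrightarrow> q \<in> dend_ideal \<Longrightarrow> p + q \<in> dend_ideal"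
| scale: "p \<in> dend_ideal \<Longrightarrow> smul r p \<in> dend_ideal"
| left: "p \<in> dend_ideal \<Longrightarrow> graft_left opr p t \<in> dend_ideal"
| right: "p \<in> dend_ideal \<Longrightarrow> graft_right opr t p \<in> dend_ideal"

fun dgen :: "gen \<Rightarrow> btree \<Rightarrow> btree \<Rightarrow> btree \<Rightarrow> btree" where
  "dgen W1 x y z = succ x (prec y z)"
| "dgen W2 x y z = prec x (prec y z)"
| "dgen W3 x y z = prec x (succ y z)"
| "dgen W4 x y z = succ (succ x y) z"
| "dgen W5 x y z = succ (prec x y) z"

fun dtree :: "ttree \<Rightarrow> btree" where
  "dtree TLeaf = BLeaf"
| "dtree (TNode g a b c) = dgen g (dtree a) (dtree b) (dtree c)"

text \<open>Linear extension of d, landing in the free operad on prec, succ (i.e. a lift to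
  the free operad; an element of FT maps to 0 in D iff its lift lies in dend_ideal).\<close>
definition dlin :: "('k::field_char_0) ft \<Rightarrow> 'k bt" where
  "dlin c = (\<Sum>t\<in>Poly_Mapping.keys c. Poly_Mapping.single (dtree t) (Poly_Mapping.lookup c t))"

definition ker_d5 :: "('k::field_char_0) ft set" where
  "ker_d5 = {c \<in> FT5. dlin c \<in> dend_ideal}"

text \<open>A i j = ((v,w,x)_i,y,z)_j,  B i j = (v,(w,x,y)_i,z)_j,  C i j = (v,w,(x,y,z)_i)_j.\<close>
definition A :: "gen \<Rightarrow> gen \<Rightarrow> ('k::field_char_0) ft" where
  "A i j = mon (TNode j (TNode i TLeaf TLeaf TLeaf) TLeaf TLeaf)"
definition B :: "gen \<Rightarrow> gen \<Rightarrow> ('k::field_char_0) ft" where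
  "B i j = mon (TNode j TLeaf (TNode i TLeaf TLeaf TLeaf) TLeaf)"
definition C :: "gen \<Rightarrow> gen \<Rightarrow> ('k::field_char_0) ft" where
  "C i j = mon (TNode j TLeaf TLeaf (TNode i TLeaf TLeaf TLeaf))"

definition rels33 :: "('k::field_char_0) ft list" where
  "rels33 = [
    A W4 W2 - C W2 W4,
    A W5 W2 - C W2 W5,
    A W4 W3 - C W3 W4,
    A W5 W3 - C W3 W5,
    A W1 W1 + A W2 W1 - B W5 W1,
    B W1 W3 + B W2 W3 - C W5 W3,
    A W1 W4 + A W2 W4 - B W5 W4,
    A W1 W1 + A W4 W1 - C W1 W4,
    B W4 W2 + B W5 W2 - C W1 W3,
    A W4 W5 + A W5 W5 - B W1 W4,
    A W4 W5 + B W2 W4 - C W5 W4,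
    B W3 W1 - C W1 W1 - C W4 W1,
    B W3 W2 - C W1 W2 - C W4 W2,
    A W3 W5 - B W1 W5 - B W4 W5,
    A W1 W2 - C W1 W1 - C W2 W1,
    A W3 W2 - B W4 W2 - C W2 W3,
    B W1 W2 - C W2 W3 - C W3 W3,
    A W1 W5 - B W2 W4 - B W3 W4,
    B W2 W1 - C W2 W1 - C W3 W1 - C W5 W1,
    A W2 W2 - B W5 W2 - C W1 W2 - C W2 W2,
    B W2 W2 - C W2 W2 - C W3 W2 - C W5 W2,
    A W3 W3 - B W1 W3 - B W4 W3 - C W3 W3,
    B W3 W3 + B W4 W3 + B W5 W3 - C W4 W3,
    A W3 W4 + A W4 W4 + A W5 W4 - B W4 W4,
    A W1 W4 + A W4 W4 + B W3 W4 - C W4 W4,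
    A W2 W5 - B W2 W5 - B W3 W5 - B W5 W5,
    A W5 W5 + B W1 W5 + B W2 W5 - C W5 W5,
    A W2 W1 + A W3 W1 + A W5 W1 - C W1 W5,
    B W4 W1 + B W5 W1 - C W1 W4 - C W1 W5,
    A W1 W3 - B W2 W1 + C W2 W1 - C W4 W1,
    B W1 W1 - C W2 W4 - C W2 W5 - C W3 W4 - C W3 W5,
    A W2 W3 - B W2 W2 - B W2 W3 + B W4 W3 + C W2 W2 - C W4 W2 - C W4 W3,
    A W2 W4 + A W2 W5 - A W4 W4 - B W2 W5 + B W4 W4 + B W4 W5 - C W4 W5
  ]"

end

theory Submission
  imports Defs "HOL-Library.Multiset"
begin


fun sh :: "nat list \<Rightarrow> nat list \<Rightarrow> nat list multiset" where
  "sh [] v = {#v#}"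
| "sh (a#u) [] = {#a#u#}"
| "sh (a#u) (b#v) = image_mset (Cons a) (sh u (b#v)) + image_mset (Cons b) (sh (a#u) v)"

lemma sh_Nil2[simp]: "sh u [] = {#u#}"
  by (cases u) auto

definition SHm :: "nat list multiset \<Rightarrow> nat list \<Rightarrow> nat list multiset" where
  "SHm X w = (\<Sum>x\<in>#X. sh x w)"
definition SHl :: "nat list \<Rightarrow> nat list multiset \<Rightarrow> nat list multiset" where
  "SHl u Y = (\<Sum>y\<in>#Y. sh u y)"

lemma SHm_add[simp]: "SHm (X + Y) w = SHm X w + SHm Y w" by (simp add: SHm_def)
lemma SHl_add[simp]: "SHl u (X + Y) = SHl u X + SHl u Y" by (simp add: SHl_def)
lemma SHm_single[simp]: "SHm {#x#} w = sh x w" by (simp add: SHm_def)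
lemma SHl_single[simp]: "SHl u {#y#} = sh u y" by (simp add: SHl_def)
lemma SHm_Nil[simp]: "SHm X [] = X" by (induction X) (auto simp: SHm_def)
lemma SHl_Nil[simp]: "SHl [] Y = Y" by (induction Y) (auto simp: SHl_def)

lemma image_sum_mset: "image_mset f (\<Sum>x\<in>#X. g x) = (\<Sum>x\<in>#X. image_mset f (g x))"
  by (induction X) auto

lemma SHm_Cons: "SHm (image_mset (Cons a) X) (c#w) =
   image_mset (Cons a) (SHm X (c#w)) + image_mset (Cons c) (SHm (image_mset (Cons a) X) w)"
  by (induction X) (auto simp: SHm_def ac_simps)

lemma SHl_Cons: "SHl (a#u) (image_mset (Cons b) Y) =
   image_mset (Cons a) (SHl u (image_mset (Cons b) Y)) + image_mset (Cons b) (SHl (a#u) Y)"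
  by (induction Y) (auto simp: SHl_def ac_simps)

lemma sh_assoc: "SHm (sh u v) w = SHl u (sh v w)"
proof (induction "length u + length v + length w" arbitrary: u v w rule: less_induct)
  case less
  show ?case
  proof (cases u)
    case Nil then show ?thesis by simp
  next
    case (Cons a u')
    show ?thesis
    proof (cases v)
      case Nil then show ?thesis by simp
    next
      case (Cons b v')
      show ?thesis
      proof (cases w)
        case Nil then show ?thesis by simp
      next
        case (Cons c w')
        have IH1: "SHm (sh u' v) w = SHl u' (sh v w)" using less \<open>u = a#u'\<close> by simp
        have IH2: "SHm (sh u v') w = SHl u (sh v' w)" using less \<open>v = b#v'\<close> by simp
        have IH3: "SHm (sh u v) w' = SHl u (sh v w')" using less \<open>w = c#w'\<close> by simp
        have L: "SHm (sh u v) w = image_mset (Cons a) (SHm (sh u' v) w) + image_mset (Cons b) (SHm (sh u v') w)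
                 + image_mset (Cons c) (SHm (sh u v) w')"
          using \<open>u = a#u'\<close> \<open>v = b#v'\<close> \<open>w = c#w'\<close> by (simp add: SHm_Cons ac_simps)
        have R: "SHl u (sh v w) = image_mset (Cons a) (SHl u' (sh v w)) + image_mset (Cons b) (SHl u (sh v' w))
                 + image_mset (Cons c) (SHl u (sh v w'))"
          using \<open>u = a#u'\<close> \<open>v = b#v'\<close> \<open>w = c#w'\<close> by (simp add: SHl_Cons ac_simps)
        show ?thesis using L R IH1 IH2 IH3 by simp
      qed
    qed
  qed
qed

lemma sh_props: "x \<in># sh u v \<Longrightarrow> length x = length u + length v \<and> set x = set u \<union> set v"
  by (induction u v arbitrary: x rule: sh.induct) auto

definition shft :: "nat \<Rightarrow> nat list \<Rightarrow> nat list" where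
  "shft k v = map (\<lambda>x. x + k) v"

lemma shft_Cons[simp]: "shft k (b#v) = (b+k) # shft k v" by (simp add: shft_def)
lemma shft_Nil[simp]: "shft k [] = []" by (simp add: shft_def)
lemma shft_shft[simp]: "shft k (shft m v) = shft (k+m) v" by (simp add: shft_def add.assoc add.commute)
lemma length_shft[simp]: "length (shft k v) = length v" by (simp add: shft_def)
lemma shft_eq_Nil[simp]: "shft k v = [] \<longleftrightarrow> v = []" by (simp add: shft_def)

lemma image_shft_Cons: "image_mset (shft k) (image_mset (Cons a) X) = image_mset (Cons (a+k)) (image_mset (shft k) X)"
  by (simp add: multiset.map_comp comp_def)

lemma image_shft_sh: "image_mset (shft k) (sh u v) = sh (shft k u) (shft k v)"
  by (induction u v rule: sh.induct) (auto simp: image_shft_Cons)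

definition hl :: "nat list \<Rightarrow> nat list \<Rightarrow> nat list multiset" where
  "hl u v = (case u of [] \<Rightarrow> {#} | a#u' \<Rightarrow> image_mset (Cons a) (sh u' v))"
definition hr :: "nat list \<Rightarrow> nat list \<Rightarrow> nat list multiset" where
  "hr u v = (case v of [] \<Rightarrow> {#} | b#v' \<Rightarrow> image_mset (Cons b) (sh u v'))"

lemma hl_hr: "u \<noteq> [] \<Longrightarrow> v \<noteq> [] \<Longrightarrow> hl u v + hr u v = sh u v"
  by (cases u; cases v) (auto simp: hl_def hr_def)

fun opw :: "dop \<Rightarrow> nat list \<Rightarrow> nat list \<Rightarrow> nat list multiset" where
  "opw Prec u v = hl u (shft (length u) v)"
| "opw Succ u v = hr u (shft (length u) v)"

definition Op :: "dop \<Rightarrow> nat list multiset \<Rightarrow> nat list multiset \<Rightarrow> nat list multiset" where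
  "Op opr M N = (\<Sum>u\<in>#M. \<Sum>v\<in>#N. opw opr u v)"

fun phi :: "btree \<Rightarrow> nat list multiset" where
  "phi BLeaf = {#[0]#}"
| "phi (BNode opr s t) = Op opr (phi s) (phi t)"

lemma Op_add1[simp]: "Op opr (M1 + M2) M3 = Op opr M1 M3 + Op opr M2 M3" by (simp add: Op_def)
lemma Op_add2[simp]: "Op opr M1 (M2 + M3) = Op opr M1 M2 + Op opr M1 M3" by (simp add: Op_def sum_mset.distrib)
lemma Op_empty1[simp]: "Op opr {#} M3 = {#}" by (simp add: Op_def)
lemma Op_empty2[simp]: "Op opr M1 {#} = {#}" by (simp add: Op_def)

lemma Op_single1: "Op opr {#u#} M3 = (\<Sum>v\<in>#M3. opw opr u v)" by (simp add: Op_def)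
lemma Op_single2: "Op opr M1 {#w#} = (\<Sum>u\<in>#M1. opw opr u w)" by (simp add: Op_def)
lemma Op_add_mset1: "Op opr (add_mset x M1) M3 = (\<Sum>v\<in>#M3. opw opr x v) + Op opr M1 M3" by (simp add: Op_def)
lemma Op_add_mset2: "Op opr M1 (add_mset x M3) = (\<Sum>u\<in>#M1. opw opr u x) + Op opr M1 M3" by (simp add: Op_def sum_mset.distrib)

lemma Op_split1: "Op opr M1 M3 = (\<Sum>u\<in>#M1. Op opr {#u#} M3)"
  by (induction M1) (simp_all add: Op_add_mset1 Op_single1)
lemma Op_split2: "Op opr M1 M3 = (\<Sum>w\<in>#M3. Op opr M1 {#w#})"
  by (induction M3) (simp_all add: Op_add_mset2 Op_single2)
lemma Op_sum1: "Op opr (\<Sum>x\<in>#X. F x) M3 = (\<Sum>x\<in>#X. Op opr (F x) M3)"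
  by (induction X) auto
lemma Op_sum2: "Op opr M1 (\<Sum>x\<in>#X. F x) = (\<Sum>x\<in>#X. Op opr M1 (F x))"
  by (induction X) auto

lemma opw_nonempty: "x \<in># opw opr u v \<Longrightarrow> x \<noteq> []"
  by (cases opr; cases u; cases v) (auto simp: hl_def hr_def)

lemma phi_nonempty: "x \<in># phi t \<Longrightarrow> x \<noteq> []"
  by (induction t arbitrary: x) (auto simp: Op_def dest: opw_nonempty)

lemma opw_props: "x \<in># opw opr u v \<Longrightarrow> length x = length u + length v \<and> set x = set u \<union> set (shft (length u) v)"
  by (cases opr; cases u; cases v) (auto simp: hl_def hr_def dest!: sh_props)


lemma opw_Prec_Cons: "opw Prec (a#u) v = image_mset (Cons a) (sh u (shft (Suc (length u)) v))"
  by (simp add: hl_def)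
lemma opw_Prec_Nil[simp]: "opw Prec [] v = {#}"
  by (simp add: hl_def)
lemma opw_Succ_Nil[simp]: "opw Succ u [] = {#}"
  by (simp add: hr_def)
lemma opw_sum: "v \<noteq> [] \<Longrightarrow> w \<noteq> [] \<Longrightarrow> opw Prec v w + opw Succ v w = sh v (shft (length v) w)"
  by (simp add: hl_hr)
declare opw.simps[simp del]
lemma opw_Succ_Cons: "opw Succ u (b#v) = image_mset (Cons (b + length u)) (sh u (shft (length u) v))"
  by (simp add: hr_def opw.simps)

lemma sum_image_Cons: "(\<Sum>x\<in>#image_mset g X. f x) = (\<Sum>x\<in>#X. f (g x))"
  by (simp add: multiset.map_comp comp_def)

lemma sum_mset_cong': "(\<And>x. x \<in># X \<Longrightarrow> f x = g x) \<Longrightarrow> (\<Sum>x\<in>#X. f x) = (\<Sum>x\<in>#X. g x)"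
  by (metis image_mset_cong)

lemma SHl_shft: "(\<Sum>y\<in>#Y. sh u (shft k y)) = SHl u (image_mset (shft k) Y)"
  by (simp add: SHl_def sum_image_Cons)

lemma word_I1:
  assumes "v = b#v'" "w \<noteq> []"
  shows "Op Prec (opw Succ u v) {#w#} = Op Succ {#u#} (opw Prec v w)"
proof -
  let ?k = "length u" and ?m = "length v"
  have "Op Prec (opw Succ u v) {#w#} = (\<Sum>x\<in>#sh u (shft ?k v'). opw Prec ((b+?k)#x) w)"
    using assms by (simp add: Op_single2 opw_Succ_Cons sum_image_Cons)
  also have "\<dots> = (\<Sum>x\<in>#sh u (shft ?k v'). image_mset (Cons (b+?k)) (sh x (shft (?k+?m) w)))"
    by (rule sum_mset_cong') (use assms in \<open>auto simp: opw_Prec_Cons dest!: sh_props\<close>)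
  also have "\<dots> = image_mset (Cons (b+?k)) (SHm (sh u (shft ?k v')) (shft (?k+?m) w))"
    by (simp add: SHm_def image_sum_mset)
  finally have L: "Op Prec (opw Succ u v) {#w#} = \<dots>" .
  have "Op Succ {#u#} (opw Prec v w) = (\<Sum>y\<in>#sh v' (shft ?m w). opw Succ u (b#y))"
    using assms by (simp add: Op_single1 opw_Prec_Cons sum_image_Cons)
  also have "\<dots> = image_mset (Cons (b+?k)) (SHl u (sh (shft ?k v') (shft (?k+?m) w)))"
    by (simp add: opw_Succ_Cons image_sum_mset[symmetric] SHl_shft image_shft_sh)
  finally show ?thesis using L by (simp add: sh_assoc)
qed

lemma word_I2:
  assumes "u = a#u'" "v \<noteq> []" "w \<noteq> []"
  shows "Op Prec (opw Prec u v) {#w#} = Op Prec {#u#} (opw Prec v w) + Op Prec {#u#} (opw Succ v w)"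
proof -
  let ?k = "length u" and ?m = "length v"
  have "Op Prec (opw Prec u v) {#w#} = (\<Sum>x\<in>#sh u' (shft ?k v). opw Prec (a#x) w)"
    using assms by (simp add: Op_single2 opw_Prec_Cons sum_image_Cons)
  also have "\<dots> = (\<Sum>x\<in>#sh u' (shft ?k v). image_mset (Cons a) (sh x (shft (?k+?m) w)))"
    by (rule sum_mset_cong') (use assms in \<open>auto simp: opw_Prec_Cons dest!: sh_props\<close>)
  also have "\<dots> = image_mset (Cons a) (SHm (sh u' (shft ?k v)) (shft (?k+?m) w))"
    by (simp add: SHm_def image_sum_mset)
  finally have L: "Op Prec (opw Prec u v) {#w#} = \<dots>" .
  have "Op Prec {#u#} (opw Prec v w) + Op Prec {#u#} (opw Succ v w) = Op Prec {#u#} (opw Prec v w + opw Succ v w)"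
    by simp
  also have "\<dots> = Op Prec {#u#} (sh v (shft ?m w))"
    using assms by (simp add: opw_sum)
  also have "\<dots> = (\<Sum>y\<in>#sh v (shft ?m w). image_mset (Cons a) (sh u' (shft ?k y)))"
    using assms by (simp add: Op_single1 opw_Prec_Cons)
  also have "\<dots> = image_mset (Cons a) (SHl u' (sh (shft ?k v) (shft (?k+?m) w)))"
    by (simp add: image_sum_mset[symmetric] SHl_shft image_shft_sh)
  finally show ?thesis using L by (simp add: sh_assoc)
qed

lemma word_I3:
  assumes "u \<noteq> []" "v \<noteq> []" "w = c#w'"
  shows "Op Succ {#u#} (opw Succ v w) = Op Succ (opw Succ u v) {#w#} + Op Succ (opw Prec u v) {#w#}"
proof -
  let ?k = "length u" and ?m = "length v"
  have "Op Succ {#u#} (opw Succ v w) = (\<Sum>y\<in>#sh v (shft ?m w'). opw Succ u ((c+?m)#y))"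
    using assms by (simp add: Op_single1 opw_Succ_Cons sum_image_Cons)
  also have "\<dots> = (\<Sum>y\<in>#sh v (shft ?m w'). image_mset (Cons (c+?m+?k)) (sh u (shft ?k y)))"
    by (simp add: opw_Succ_Cons)
  also have "\<dots> = image_mset (Cons (c+?m+?k)) (SHl u (sh (shft ?k v) (shft (?k+?m) w')))"
    by (simp add: image_sum_mset[symmetric] SHl_shft image_shft_sh)
  finally have L: "Op Succ {#u#} (opw Succ v w) = \<dots>" .
  have "Op Succ (opw Succ u v) {#w#} + Op Succ (opw Prec u v) {#w#} = Op Succ (opw Prec u v + opw Succ u v) {#w#}"
    by (simp add: add.commute)
  also have "\<dots> = Op Succ (sh u (shft ?k v)) {#w#}"
    using assms by (simp add: opw_sum)
  also have "\<dots> = (\<Sum>x\<in>#sh u (shft ?k v). image_mset (Cons (c+?m+?k)) (sh x (shft (?k+?m) w')))"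
    unfolding Op_single2
    by (rule sum_mset_cong') (use assms in \<open>auto simp: opw_Succ_Cons ac_simps dest!: sh_props\<close>)
  also have "\<dots> = image_mset (Cons (c+?m+?k)) (SHm (sh u (shft ?k v)) (shft (?k+?m) w'))"
    by (simp add: SHm_def image_sum_mset)
  finally show ?thesis using L by (simp add: sh_assoc)
qed


lemma word_I1': "v \<noteq> [] \<Longrightarrow> w \<noteq> [] \<Longrightarrow> Op Prec (opw Succ u v) {#w#} = Op Succ {#u#} (opw Prec v w)"
  using word_I1 by (cases v) auto
lemma word_I2': "u \<noteq> [] \<Longrightarrow> v \<noteq> [] \<Longrightarrow> w \<noteq> [] \<Longrightarrow>
   Op Prec (opw Prec u v) {#w#} = Op Prec {#u#} (opw Prec v w) + Op Prec {#u#} (opw Succ v w)"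
  using word_I2 by (cases u) auto
lemma word_I3': "u \<noteq> [] \<Longrightarrow> v \<noteq> [] \<Longrightarrow> w \<noteq> [] \<Longrightarrow>
   Op Succ {#u#} (opw Succ v w) = Op Succ (opw Succ u v) {#w#} + Op Succ (opw Prec u v) {#w#}"
  using word_I3 by (cases w) auto

lemma L_exp: "Op o1 (Op o2 M1 M2) M3 = (\<Sum>u\<in>#M1. \<Sum>v\<in>#M2. \<Sum>w\<in>#M3. Op o1 (opw o2 u v) {#w#})"
proof -
  have "Op o1 (Op o2 M1 M2) M3 = (\<Sum>u\<in>#M1. \<Sum>v\<in>#M2. Op o1 (opw o2 u v) M3)"
    by (simp add: Op_def[of o2 M1 M2] Op_sum1)
  also have "\<dots> = (\<Sum>u\<in>#M1. \<Sum>v\<in>#M2. \<Sum>w\<in>#M3. Op o1 (opw o2 u v) {#w#})"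
    by (simp only: Op_split2[of o1 _ M3])
  finally show ?thesis .
qed

lemma R_exp: "Op o1 M1 (Op o2 M2 M3) = (\<Sum>u\<in>#M1. \<Sum>v\<in>#M2. \<Sum>w\<in>#M3. Op o1 {#u#} (opw o2 v w))"
proof -
  have "Op o1 M1 (Op o2 M2 M3) = (\<Sum>u\<in>#M1. Op o1 {#u#} (Op o2 M2 M3))"
    by (rule Op_split1)
  also have "\<dots> = (\<Sum>u\<in>#M1. \<Sum>v\<in>#M2. \<Sum>w\<in>#M3. Op o1 {#u#} (opw o2 v w))"
    by (simp add: Op_def[of o2 M2 M3] Op_sum2)
  finally show ?thesis .
qed

lemma phi_I1: "phi (prec (succ a b) c) = phi (succ a (prec b c))"
  by (simp add: L_exp R_exp phi_nonempty word_I1' cong: sum_mset_cong')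

lemma phi_I2: "phi (prec (prec a b) c) = phi (prec a (prec b c)) + phi (prec a (succ b c))"
  by (simp add: L_exp R_exp phi_nonempty word_I2' sum_mset.distrib cong: sum_mset_cong')

lemma phi_I3: "phi (succ a (succ b c)) = phi (succ (succ a b) c) + phi (succ (prec a b) c)"
  by (simp add: L_exp R_exp phi_nonempty word_I3' sum_mset.distrib cong: sum_mset_cong')


lemma mem_le_sum_list_nat: "x \<in> set (xs::nat list) \<Longrightarrow> x \<le> sum_list xs"
  by (induction xs) auto

definition UU :: "nat list \<Rightarrow> nat list set" where
  "UU w = {u. set u \<subseteq> {..sum_list w} \<and> length u \<le> length w}"

lemma finite_UU: "finite (UU w)"
  unfolding UU_def by (rule finite_lists_length_le) simp

lemma count_sum_mset_image: "count (\<Sum>x\<in>#M. f x) w = (\<Sum>x\<in>#M. count (f x) w)"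
  by (induction M) auto

lemma sum_mset_to_sum:
  fixes g :: "'a \<Rightarrow> nat"
  assumes "finite U" "\<And>u. u \<in># M \<Longrightarrow> g u \<noteq> 0 \<Longrightarrow> u \<in> U"
  shows "(\<Sum>u\<in>#M. g u) = (\<Sum>u\<in>U. count M u * g u)"
  using assms(2)
proof (induction M)
  case empty then show ?case by simp
next
  case (add a M)
  have IH: "(\<Sum>u\<in>#M. g u) = (\<Sum>u\<in>U. count M u * g u)" using add by auto
  have "(\<Sum>u\<in>U. count (add_mset a M) u * g u) = (\<Sum>u\<in>U. count M u * g u + (if u = a then g u else 0))"
    by (rule sum.cong) auto
  also have "\<dots> = (\<Sum>u\<in>U. count M u * g u) + (if a \<in> U then g a else 0)"
    using assms(1) by (simp add: sum.distrib)
  also have "\<dots> = (\<Sum>u\<in>U. count M u * g u) + g a"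
    using add.prems[of a] by auto
  finally show ?case using IH by simp
qed

lemma opw_left_UU: "w \<in># opw opr u v \<Longrightarrow> u \<in> UU w"
  using opw_props[of w opr u v] mem_le_sum_list_nat[of _ w] unfolding UU_def by auto

lemma opw_right_UU: "w \<in># opw opr u v \<Longrightarrow> v \<in> UU w"
proof -
  assume a: "w \<in># opw opr u v"
  have s1: "set (shft (length u) v) \<subseteq> set w" "length v \<le> length w"
    using opw_props[OF a] by auto
  have s2: "x \<in> set v \<Longrightarrow> x + length u \<in> set (shft (length u) v)" for x
    by (simp add: shft_def)
  have "x \<in> set v \<Longrightarrow> x \<le> sum_list w" for x
  proof -
    assume "x \<in> set v"
    then have "x + length u \<in> set w" using s1 s2 by blast
    then have "x + length u \<le> sum_list w" by (rule mem_le_sum_list_nat)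
    then show ?thesis by simp
  qed
  then show ?thesis using \<open>length v \<le> length w\<close> unfolding UU_def by auto
qed

lemma count_Op_left: "count (Op opr M N) w = (\<Sum>u\<in>UU w. count M u * count (Op opr {#u#} N) w)"
proof -
  have "count (Op opr M N) w = (\<Sum>u\<in>#M. count (Op opr {#u#} N) w)"
    by (subst Op_split1) (simp add: count_sum_mset_image)
  also have "\<dots> = (\<Sum>u\<in>UU w. count M u * count (Op opr {#u#} N) w)"
  proof (rule sum_mset_to_sum[OF finite_UU])
    fix u assume "count (Op opr {#u#} N) w \<noteq> 0"
    then have "w \<in># Op opr {#u#} N" by (simp add: count_eq_zero_iff)
    then obtain v where "w \<in># opw opr u v" by (auto simp: Op_single1)
    then show "u \<in> UU w" by (rule opw_left_UU)
  qed
  finally show ?thesis .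
qed

lemma count_Op_right: "count (Op opr N M) w = (\<Sum>v\<in>UU w. count M v * count (Op opr N {#v#}) w)"
proof -
  have "count (Op opr N M) w = (\<Sum>v\<in>#M. count (Op opr N {#v#}) w)"
    by (subst Op_split2) (simp add: count_sum_mset_image)
  also have "\<dots> = (\<Sum>v\<in>UU w. count M v * count (Op opr N {#v#}) w)"
  proof (rule sum_mset_to_sum[OF finite_UU])
    fix v assume "count (Op opr N {#v#}) w \<noteq> 0"
    then have "w \<in># Op opr N {#v#}" by (simp add: count_eq_zero_iff)
    then obtain u where "w \<in># opw opr u v" by (auto simp: Op_single2)
    then show "v \<in> UU w" by (rule opw_right_UU)
  qed
  finally show ?thesis .
qed


section \<open>Linear functionals on poly_mappings\<close>

definition Lf :: "('a \<Rightarrow> 'k) \<Rightarrow> ('a \<Rightarrow>\<^sub>0 'k) \<Rightarrow> 'k::field_char_0" where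
  "Lf f p = (\<Sum>t\<in>Poly_Mapping.keys p. Poly_Mapping.lookup p t * f t)"

lemma Lf_superset: "finite K \<Longrightarrow> Poly_Mapping.keys p \<subseteq> K \<Longrightarrow> Lf f p = (\<Sum>t\<in>K. Poly_Mapping.lookup p t * f t)"
  unfolding Lf_def by (rule sum.mono_neutral_left) (auto simp: in_keys_iff)

lemma Lf_add: "Lf f (p + q) = Lf f p + Lf f q"
proof -
  let ?K = "Poly_Mapping.keys p \<union> Poly_Mapping.keys q"
  have "Lf f (p + q) = (\<Sum>t\<in>?K. Poly_Mapping.lookup (p+q) t * f t)"
    by (rule Lf_superset) (auto simp: keys_add)
  also have "\<dots> = (\<Sum>t\<in>?K. Poly_Mapping.lookup p t * f t) + (\<Sum>t\<in>?K. Poly_Mapping.lookup q t * f t)"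
    by (simp add: lookup_add distrib_right sum.distrib)
  also have "\<dots> = Lf f p + Lf f q"
    by (simp add: Lf_superset[of ?K p] Lf_superset[of ?K q])
  finally show ?thesis .
qed

lemma Lf_uminus: "Lf f (- p) = - Lf f p"
  by (simp add: Lf_def sum_negf)

lemma Lf_diff: "Lf f (p - q) = Lf f p - Lf f q"
  using Lf_add[of f p "-q"] by (simp add: Lf_uminus)

lemma Lf_zero[simp]: "Lf f 0 = 0" by (simp add: Lf_def)

lemma Lf_single: "Lf f (Poly_Mapping.single t a) = a * f t"
  by (simp add: Lf_def)

lemma lookup_smul: "Poly_Mapping.lookup (smul r p) t = r * Poly_Mapping.lookup p t"
  by (simp add: smul_def Poly_Mapping.map.rep_eq when_def)

lemma keys_smul: "Poly_Mapping.keys (smul r p) \<subseteq> Poly_Mapping.keys p"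
  by (auto simp: in_keys_iff lookup_smul)

lemma Lf_smul: "Lf f (smul r p) = r * Lf f p"
proof -
  have "Lf f (smul r p) = (\<Sum>t\<in>Poly_Mapping.keys p. Poly_Mapping.lookup (smul r p) t * f t)"
    by (rule Lf_superset) (auto intro: keys_smul[THEN subsetD])
  then show ?thesis by (simp add: Lf_def lookup_smul sum_distrib_left mult.assoc)
qed

lemma Lf_sum: "finite S \<Longrightarrow> Lf f (\<Sum>i\<in>S. g i) = (\<Sum>i\<in>S. Lf f (g i))"
  by (induction S rule: finite_induct) (auto simp: Lf_add)

lemma Lf_mon: "Lf f (mon t) = f t"
  by (simp add: mon_def Lf_single)

section \<open>The invariant\<close>

definition FF :: "nat list \<Rightarrow> ('k::field_char_0) bt \<Rightarrow> 'k" where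
  "FF w = Lf (\<lambda>s. of_nat (count (phi s) w))"

lemma FF_graft_left:
  "FF w (graft_left opr p t) = (\<Sum>u\<in>UU w. of_nat (count (Op opr {#u#} (phi t)) w) * FF u p)"
proof -
  have "FF w (graft_left opr p t) = (\<Sum>s\<in>Poly_Mapping.keys p. Poly_Mapping.lookup p s *
          of_nat (\<Sum>u\<in>UU w. count (phi s) u * count (Op opr {#u#} (phi t)) w))"
  proof -
    have "FF w (graft_left opr p t) = (\<Sum>s\<in>Poly_Mapping.keys p. Poly_Mapping.lookup p s * of_nat (count (phi (BNode opr s t)) w))"
      by (simp add: FF_def graft_left_def Lf_sum Lf_single del: phi.simps)
    then show ?thesis by (simp only: phi.simps count_Op_left[of opr "phi s" "phi t" w for s])
  qed
  also have "\<dots> = (\<Sum>u\<in>UU w. of_nat (count (Op opr {#u#} (phi t)) w) * FF u p)"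
    by (simp add: FF_def Lf_def sum_distrib_left sum_distrib_right sum.swap[of _ "UU w"] ac_simps)
  finally show ?thesis .
qed

lemma FF_graft_right:
  "FF w (graft_right opr t p) = (\<Sum>v\<in>UU w. of_nat (count (Op opr (phi t) {#v#}) w) * FF v p)"
proof -
  have "FF w (graft_right opr t p) = (\<Sum>s\<in>Poly_Mapping.keys p. Poly_Mapping.lookup p s *
          of_nat (\<Sum>v\<in>UU w. count (phi s) v * count (Op opr (phi t) {#v#}) w))"
  proof -
    have "FF w (graft_right opr t p) = (\<Sum>s\<in>Poly_Mapping.keys p. Poly_Mapping.lookup p s * of_nat (count (phi (BNode opr t s)) w))"
      by (simp add: FF_def graft_right_def Lf_sum Lf_single del: phi.simps)
    then show ?thesis by (simp only: phi.simps count_Op_right[of opr "phi t" "phi s" w for s])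
  qed
  also have "\<dots> = (\<Sum>v\<in>UU w. of_nat (count (Op opr (phi t) {#v#}) w) * FF v p)"
    by (simp add: FF_def Lf_def sum_distrib_left sum_distrib_right sum.swap[of _ "UU w"] ac_simps)
  finally show ?thesis .
qed

lemma ideal_FF: "p \<in> dend_ideal \<Longrightarrow> FF w p = 0"
proof (induction p arbitrary: w rule: dend_ideal.induct)
  case (rel1 a b c) then show ?case
    by (simp add: FF_def dend_rel1_def Lf_diff Lf_mon phi_I1[simplified])
next
  case (rel2 a b c) then show ?case
    using arg_cong[OF phi_I2[of a b c], of "\<lambda>M. count M w"]
    by (simp add: FF_def dend_rel2_def Lf_diff Lf_mon)
next
  case (rel3 a b c) then show ?case
    using arg_cong[OF phi_I3[of a b c], of "\<lambda>M. count M w"]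
    by (simp add: FF_def dend_rel3_def Lf_diff Lf_mon)
next
  case zero then show ?case by (simp add: FF_def)
next
  case (add p q) then show ?case by (simp add: FF_def Lf_add)
next
  case (scale p r) then show ?case by (simp add: FF_def Lf_smul)
next
  case (left p opr t) then show ?case by (simp add: FF_graft_left)
next
  case (right p opr t) then show ?case by (simp add: FF_graft_right)
qed


definition Lmap :: "('a \<Rightarrow> 'b) \<Rightarrow> ('a \<Rightarrow>\<^sub>0 'k) \<Rightarrow> ('b \<Rightarrow>\<^sub>0 'k::field_char_0)" where
  "Lmap g p = (\<Sum>t\<in>Poly_Mapping.keys p. Poly_Mapping.single (g t) (Poly_Mapping.lookup p t))"

lemma Lmap_superset: "finite K \<Longrightarrow> Poly_Mapping.keys p \<subseteq> K \<Longrightarrow>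
   Lmap g p = (\<Sum>t\<in>K. Poly_Mapping.single (g t) (Poly_Mapping.lookup p t))"
  unfolding Lmap_def by (rule sum.mono_neutral_left) (auto simp: in_keys_iff)

lemma Lmap_add: "Lmap g (p + q) = Lmap g p + Lmap g q"
proof -
  let ?K = "Poly_Mapping.keys p \<union> Poly_Mapping.keys q"
  have "Lmap g (p + q) = (\<Sum>t\<in>?K. Poly_Mapping.single (g t) (Poly_Mapping.lookup (p+q) t))"
    by (rule Lmap_superset) (auto simp: keys_add)
  also have "\<dots> = (\<Sum>t\<in>?K. Poly_Mapping.single (g t) (Poly_Mapping.lookup p t)) +
       (\<Sum>t\<in>?K. Poly_Mapping.single (g t) (Poly_Mapping.lookup q t))"
    by (simp add: lookup_add single_add sum.distrib)
  also have "\<dots> = Lmap g p + Lmap g q"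
    by (simp add: Lmap_superset[of ?K p] Lmap_superset[of ?K q])
  finally show ?thesis .
qed

lemma Lmap_zero[simp]: "Lmap g 0 = 0" by (simp add: Lmap_def)

lemma Lmap_single: "Lmap g (Poly_Mapping.single t a) = Poly_Mapping.single (g t) a"
  by (simp add: Lmap_def)

lemma graft_left_Lmap: "graft_left opr p t = Lmap (\<lambda>s. BNode opr s t) p"
  by (simp add: graft_left_def Lmap_def)
lemma graft_right_Lmap: "graft_right opr t p = Lmap (BNode opr t) p"
  by (simp add: graft_right_def Lmap_def)
lemma dlin_Lmap: "dlin p = Lmap dtree p"
  by (simp add: dlin_def Lmap_def)

definition evl :: "('a \<times> int) list \<Rightarrow> ('a \<Rightarrow>\<^sub>0 'k::field_char_0)" where
  "evl xs = sum_list (map (\<lambda>(t,c). Poly_Mapping.single t (of_int c)) xs)"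

definition sumc :: "('a \<times> int) list \<Rightarrow> 'a \<Rightarrow> int" where
  "sumc xs s = sum_list (map (\<lambda>(t,c). if t = s then c else 0) xs)"

lemma evl_Nil[simp]: "evl [] = 0" by (simp add: evl_def)
lemma evl_Cons: "evl ((t,c)#xs) = Poly_Mapping.single t (of_int c) + evl xs" by (simp add: evl_def)
lemma evl_append: "evl (xs @ ys) = evl xs + evl ys" by (simp add: evl_def)

lemma lookup_evl: "Poly_Mapping.lookup (evl xs) s = of_int (sumc xs s)"
  by (induction xs) (auto simp: evl_def sumc_def lookup_add lookup_single when_def)

lemma sumc_notin: "s \<notin> fst ` set xs \<Longrightarrow> sumc xs s = 0"
  by (induction xs) (auto simp: sumc_def)

definition check :: "('a \<times> int) list \<Rightarrow> ('a \<times> int) list \<Rightarrow> bool" where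
  "check xs ys = list_all (\<lambda>s. sumc xs s = sumc ys s) (map fst (xs @ ys))"

lemma evl_eqI: "check xs ys \<Longrightarrow> (evl xs :: 'a \<Rightarrow>\<^sub>0 'k::field_char_0) = evl ys"
proof (rule poly_mapping_eqI)
  fix s assume c: "check xs ys"
  show "Poly_Mapping.lookup (evl xs :: 'a \<Rightarrow>\<^sub>0 'k) s = Poly_Mapping.lookup (evl ys) s"
  proof (cases "s \<in> fst ` set (xs @ ys)")
    case True then show ?thesis using c by (auto simp: check_def lookup_evl list_all_iff)
  next
    case False then show ?thesis by (simp add: lookup_evl sumc_notin image_Un)
  qed
qed

lemma Lmap_evl: "Lmap g (evl xs) = evl (map (\<lambda>(t,c). (g t, c)) xs)"
  by (induction xs) (auto simp: evl_Cons Lmap_add Lmap_single)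

lemma smul_add: "smul r (p + q) = smul r p + smul r q"
  by (rule poly_mapping_eqI) (simp add: lookup_smul lookup_add algebra_simps)
lemma smul_zero[simp]: "smul r 0 = 0"
  by (rule poly_mapping_eqI) (simp add: lookup_smul)
lemma smul_single: "smul r (Poly_Mapping.single t a) = Poly_Mapping.single t (r * a)"
  by (rule poly_mapping_eqI) (simp add: lookup_smul lookup_single when_def)

lemma evl_scale: "evl (map (\<lambda>(t,m). (t, n * m)) xs) = smul (of_int n) (evl xs)"
  by (induction xs) (auto simp: evl_Cons smul_add smul_single)

section \<open>Derivations in the ideal\<close>

fun plug :: "(bool \<times> dop \<times> btree) list \<Rightarrow> btree \<Rightarrow> btree" where
  "plug [] t = t"
| "plug ((b,opr,r)#cs) t = plug cs (if b then BNode opr t r else BNode opr r t)"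

fun gctx :: "(bool \<times> dop \<times> btree) list \<Rightarrow> ('k::field_char_0) bt \<Rightarrow> 'k bt" where
  "gctx [] p = p"
| "gctx ((b,opr,r)#cs) p = gctx cs (if b then graft_left opr p r else graft_right opr r p)"

lemma gctx_ideal: "p \<in> dend_ideal \<Longrightarrow> gctx cs p \<in> dend_ideal"
proof (induction cs arbitrary: p)
  case Nil then show ?case by simp
next
  case (Cons x cs)
  obtain b opr r where x: "x = (b,opr,r)" by (cases x) auto
  have "(if b then graft_left opr p r else graft_right opr r p) \<in> dend_ideal"
    using Cons.prems by (auto intro: dend_ideal.left dend_ideal.right)
  then show ?case using Cons.IH by (simp add: x)
qed

lemma gctx_evl: "gctx cs (evl xs) = evl (map (\<lambda>(t,c). (plug cs t, c)) xs)"
proof (induction cs arbitrary: xs)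
  case Nil then show ?case by simp
next
  case (Cons x cs)
  obtain b opr r where x: "x = (b,opr,r)" by (cases x) auto
  show ?case
    using Cons[of "map (\<lambda>(t,c). (if b then BNode opr t r else BNode opr r t, c)) xs"]
    by (cases b) (simp_all add: x graft_left_Lmap graft_right_Lmap Lmap_evl comp_def case_prod_beta)
qed

definition rellist :: "nat \<Rightarrow> btree \<Rightarrow> btree \<Rightarrow> btree \<Rightarrow> (btree \<times> int) list" where
  "rellist k a b c = (if k = 1 then [(prec (succ a b) c, 1), (succ a (prec b c), -1)]
     else if k = 2 then [(prec (prec a b) c, 1), (prec a (prec b c), -1), (prec a (succ b c), -1)]
     else [(succ a (succ b c), 1), (succ (succ a b) c, -1), (succ (prec a b) c, -1)])"

lemma rellist_ideal: "(evl (rellist k a b c) :: ('k::field_char_0) bt) \<in> dend_ideal"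
proof -
  have "evl (rellist k a b c) = (if k = 1 then dend_rel1 a b c else if k = 2 then dend_rel2 a b c
        else dend_rel3 a b c :: 'k bt)"
    by (simp add: rellist_def evl_Cons dend_rel1_def dend_rel2_def dend_rel3_def mon_def
        single_uminus)
  then show ?thesis by (simp add: dend_ideal.rel1 dend_ideal.rel2 dend_ideal.rel3)
qed

type_synonym step = "(bool \<times> dop \<times> btree) list \<times> nat \<times> btree \<times> btree \<times> btree \<times> int"

fun steplist :: "step \<Rightarrow> (btree \<times> int) list" where
  "steplist (cs, k, a, b, c, n) = map (\<lambda>(t,m). (plug cs t, n * m)) (rellist k a b c)"

lemma steplist_ideal: "(evl (steplist st) :: ('k::field_char_0) bt) \<in> dend_ideal"
proof -
  obtain cs k a b c n where st: "st = (cs, k, a, b, c, n)" by (cases st) auto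
  have "(evl (steplist st) :: 'k bt) = smul (of_int n) (gctx cs (evl (rellist k a b c)))"
    by (simp add: st gctx_evl evl_scale[symmetric] comp_def case_prod_beta split_def)
  then show ?thesis by (simp add: dend_ideal.scale gctx_ideal rellist_ideal)
qed

lemma derivs_ideal: "(evl (concat (map steplist D)) :: ('k::field_char_0) bt) \<in> dend_ideal"
  by (induction D) (auto simp: evl_append intro: dend_ideal.zero dend_ideal.add steplist_ideal)

lemma deriv_check: "check xs (concat (map steplist D)) \<Longrightarrow> (evl xs :: ('k::field_char_0) bt) \<in> dend_ideal"
  using evl_eqI[of xs "concat (map steplist D)"] derivs_ideal[of D] by metis



definition T75 :: "ttree list" where
  "T75 = [(TNode W1 (TNode W1 TLeaf TLeaf TLeaf) TLeaf TLeaf),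
    (TNode W2 (TNode W1 TLeaf TLeaf TLeaf) TLeaf TLeaf),
    (TNode W3 (TNode W1 TLeaf TLeaf TLeaf) TLeaf TLeaf),
    (TNode W4 (TNode W1 TLeaf TLeaf TLeaf) TLeaf TLeaf),
    (TNode W5 (TNode W1 TLeaf TLeaf TLeaf) TLeaf TLeaf),
    (TNode W1 (TNode W2 TLeaf TLeaf TLeaf) TLeaf TLeaf),
    (TNode W2 (TNode W2 TLeaf TLeaf TLeaf) TLeaf TLeaf),
    (TNode W3 (TNode W2 TLeaf TLeaf TLeaf) TLeaf TLeaf),
    (TNode W4 (TNode W2 TLeaf TLeaf TLeaf) TLeaf TLeaf),
    (TNode W5 (TNode W2 TLeaf TLeaf TLeaf) TLeaf TLeaf),
    (TNode W1 (TNode W3 TLeaf TLeaf TLeaf) TLeaf TLeaf),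
    (TNode W2 (TNode W3 TLeaf TLeaf TLeaf) TLeaf TLeaf),
    (TNode W3 (TNode W3 TLeaf TLeaf TLeaf) TLeaf TLeaf),
    (TNode W4 (TNode W3 TLeaf TLeaf TLeaf) TLeaf TLeaf),
    (TNode W5 (TNode W3 TLeaf TLeaf TLeaf) TLeaf TLeaf),
    (TNode W1 (TNode W4 TLeaf TLeaf TLeaf) TLeaf TLeaf),
    (TNode W2 (TNode W4 TLeaf TLeaf TLeaf) TLeaf TLeaf),
    (TNode W3 (TNode W4 TLeaf TLeaf TLeaf) TLeaf TLeaf),
    (TNode W4 (TNode W4 TLeaf TLeaf TLeaf) TLeaf TLeaf),
    (TNode W5 (TNode W4 TLeaf TLeaf TLeaf) TLeaf TLeaf),
    (TNode W1 (TNode W5 TLeaf TLeaf TLeaf) TLeaf TLeaf),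
    (TNode W2 (TNode W5 TLeaf TLeaf TLeaf) TLeaf TLeaf),
    (TNode W3 (TNode W5 TLeaf TLeaf TLeaf) TLeaf TLeaf),
    (TNode W4 (TNode W5 TLeaf TLeaf TLeaf) TLeaf TLeaf),
    (TNode W5 (TNode W5 TLeaf TLeaf TLeaf) TLeaf TLeaf),
    (TNode W1 TLeaf (TNode W1 TLeaf TLeaf TLeaf) TLeaf),
    (TNode W2 TLeaf (TNode W1 TLeaf TLeaf TLeaf) TLeaf),
    (TNode W3 TLeaf (TNode W1 TLeaf TLeaf TLeaf) TLeaf),
    (TNode W4 TLeaf (TNode W1 TLeaf TLeaf TLeaf) TLeaf),
    (TNode W5 TLeaf (TNode W1 TLeaf TLeaf TLeaf) TLeaf),
    (TNode W1 TLeaf (TNode W2 TLeaf TLeaf TLeaf) TLeaf),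
    (TNode W2 TLeaf (TNode W2 TLeaf TLeaf TLeaf) TLeaf),
    (TNode W3 TLeaf (TNode W2 TLeaf TLeaf TLeaf) TLeaf),
    (TNode W4 TLeaf (TNode W2 TLeaf TLeaf TLeaf) TLeaf),
    (TNode W5 TLeaf (TNode W2 TLeaf TLeaf TLeaf) TLeaf),
    (TNode W1 TLeaf (TNode W3 TLeaf TLeaf TLeaf) TLeaf),
    (TNode W2 TLeaf (TNode W3 TLeaf TLeaf TLeaf) TLeaf),
    (TNode W3 TLeaf (TNode W3 TLeaf TLeaf TLeaf) TLeaf),
    (TNode W4 TLeaf (TNode W3 TLeaf TLeaf TLeaf) TLeaf),
    (TNode W5 TLeaf (TNode W3 TLeaf TLeaf TLeaf) TLeaf),
    (TNode W1 TLeaf (TNode W4 TLeaf TLeaf TLeaf) TLeaf),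
    (TNode W2 TLeaf (TNode W4 TLeaf TLeaf TLeaf) TLeaf),
    (TNode W3 TLeaf (TNode W4 TLeaf TLeaf TLeaf) TLeaf),
    (TNode W4 TLeaf (TNode W4 TLeaf TLeaf TLeaf) TLeaf),
    (TNode W5 TLeaf (TNode W4 TLeaf TLeaf TLeaf) TLeaf),
    (TNode W1 TLeaf (TNode W5 TLeaf TLeaf TLeaf) TLeaf),
    (TNode W2 TLeaf (TNode W5 TLeaf TLeaf TLeaf) TLeaf),
    (TNode W3 TLeaf (TNode W5 TLeaf TLeaf TLeaf) TLeaf),
    (TNode W4 TLeaf (TNode W5 TLeaf TLeaf TLeaf) TLeaf),
    (TNode W5 TLeaf (TNode W5 TLeaf TLeaf TLeaf) TLeaf),
    (TNode W1 TLeaf TLeaf (TNode W1 TLeaf TLeaf TLeaf)),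
    (TNode W2 TLeaf TLeaf (TNode W1 TLeaf TLeaf TLeaf)),
    (TNode W3 TLeaf TLeaf (TNode W1 TLeaf TLeaf TLeaf)),
    (TNode W4 TLeaf TLeaf (TNode W1 TLeaf TLeaf TLeaf)),
    (TNode W5 TLeaf TLeaf (TNode W1 TLeaf TLeaf TLeaf)),
    (TNode W1 TLeaf TLeaf (TNode W2 TLeaf TLeaf TLeaf)),
    (TNode W2 TLeaf TLeaf (TNode W2 TLeaf TLeaf TLeaf)),
    (TNode W3 TLeaf TLeaf (TNode W2 TLeaf TLeaf TLeaf)),
    (TNode W4 TLeaf TLeaf (TNode W2 TLeaf TLeaf TLeaf)),
    (TNode W5 TLeaf TLeaf (TNode W2 TLeaf TLeaf TLeaf)),
    (TNode W1 TLeaf TLeaf (TNode W3 TLeaf TLeaf TLeaf)),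
    (TNode W2 TLeaf TLeaf (TNode W3 TLeaf TLeaf TLeaf)),
    (TNode W3 TLeaf TLeaf (TNode W3 TLeaf TLeaf TLeaf)),
    (TNode W4 TLeaf TLeaf (TNode W3 TLeaf TLeaf TLeaf)),
    (TNode W5 TLeaf TLeaf (TNode W3 TLeaf TLeaf TLeaf)),
    (TNode W1 TLeaf TLeaf (TNode W4 TLeaf TLeaf TLeaf)),
    (TNode W2 TLeaf TLeaf (TNode W4 TLeaf TLeaf TLeaf)),
    (TNode W3 TLeaf TLeaf (TNode W4 TLeaf TLeaf TLeaf)),
    (TNode W4 TLeaf TLeaf (TNode W4 TLeaf TLeaf TLeaf)),
    (TNode W5 TLeaf TLeaf (TNode W4 TLeaf TLeaf TLeaf)),
    (TNode W1 TLeaf TLeaf (TNode W5 TLeaf TLeaf TLeaf)),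
    (TNode W2 TLeaf TLeaf (TNode W5 TLeaf TLeaf TLeaf)),
    (TNode W3 TLeaf TLeaf (TNode W5 TLeaf TLeaf TLeaf)),
    (TNode W4 TLeaf TLeaf (TNode W5 TLeaf TLeaf TLeaf)),
    (TNode W5 TLeaf TLeaf (TNode W5 TLeaf TLeaf TLeaf))]"

definition RL :: "(ttree \<times> int) list list" where
  "RL = [[((TNode W2 (TNode W4 TLeaf TLeaf TLeaf) TLeaf TLeaf), 1), ((TNode W4 TLeaf TLeaf (TNode W2 TLeaf TLeaf TLeaf)), (-1))],
    [((TNode W2 (TNode W5 TLeaf TLeaf TLeaf) TLeaf TLeaf), 1), ((TNode W5 TLeaf TLeaf (TNode W2 TLeaf TLeaf TLeaf)), (-1))],
    [((TNode W3 (TNode W4 TLeaf TLeaf TLeaf) TLeaf TLeaf), 1), ((TNode W4 TLeaf TLeaf (TNode W3 TLeaf TLeaf TLeaf)), (-1))],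
    [((TNode W3 (TNode W5 TLeaf TLeaf TLeaf) TLeaf TLeaf), 1), ((TNode W5 TLeaf TLeaf (TNode W3 TLeaf TLeaf TLeaf)), (-1))],
    [((TNode W1 (TNode W1 TLeaf TLeaf TLeaf) TLeaf TLeaf), 1), ((TNode W1 (TNode W2 TLeaf TLeaf TLeaf) TLeaf TLeaf), 1), ((TNode W1 TLeaf (TNode W5 TLeaf TLeaf TLeaf) TLeaf), (-1))],
    [((TNode W3 TLeaf (TNode W1 TLeaf TLeaf TLeaf) TLeaf), 1), ((TNode W3 TLeaf (TNode W2 TLeaf TLeaf TLeaf) TLeaf), 1), ((TNode W3 TLeaf TLeaf (TNode W5 TLeaf TLeaf TLeaf)), (-1))],
    [((TNode W4 (TNode W1 TLeaf TLeaf TLeaf) TLeaf TLeaf), 1), ((TNode W4 (TNode W2 TLeaf TLeaf TLeaf) TLeaf TLeaf), 1), ((TNode W4 TLeaf (TNode W5 TLeaf TLeaf TLeaf) TLeaf), (-1))],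
    [((TNode W1 (TNode W1 TLeaf TLeaf TLeaf) TLeaf TLeaf), 1), ((TNode W1 (TNode W4 TLeaf TLeaf TLeaf) TLeaf TLeaf), 1), ((TNode W4 TLeaf TLeaf (TNode W1 TLeaf TLeaf TLeaf)), (-1))],
    [((TNode W2 TLeaf (TNode W4 TLeaf TLeaf TLeaf) TLeaf), 1), ((TNode W2 TLeaf (TNode W5 TLeaf TLeaf TLeaf) TLeaf), 1), ((TNode W3 TLeaf TLeaf (TNode W1 TLeaf TLeaf TLeaf)), (-1))],
    [((TNode W5 (TNode W4 TLeaf TLeaf TLeaf) TLeaf TLeaf), 1), ((TNode W5 (TNode W5 TLeaf TLeaf TLeaf) TLeaf TLeaf), 1), ((TNode W4 TLeaf (TNode W1 TLeaf TLeaf TLeaf) TLeaf), (-1))],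
    [((TNode W5 (TNode W4 TLeaf TLeaf TLeaf) TLeaf TLeaf), 1), ((TNode W4 TLeaf (TNode W2 TLeaf TLeaf TLeaf) TLeaf), 1), ((TNode W4 TLeaf TLeaf (TNode W5 TLeaf TLeaf TLeaf)), (-1))],
    [((TNode W1 TLeaf (TNode W3 TLeaf TLeaf TLeaf) TLeaf), 1), ((TNode W1 TLeaf TLeaf (TNode W1 TLeaf TLeaf TLeaf)), (-1)), ((TNode W1 TLeaf TLeaf (TNode W4 TLeaf TLeaf TLeaf)), (-1))],
    [((TNode W2 TLeaf (TNode W3 TLeaf TLeaf TLeaf) TLeaf), 1), ((TNode W2 TLeaf TLeaf (TNode W1 TLeaf TLeaf TLeaf)), (-1)), ((TNode W2 TLeaf TLeaf (TNode W4 TLeaf TLeaf TLeaf)), (-1))],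
    [((TNode W5 (TNode W3 TLeaf TLeaf TLeaf) TLeaf TLeaf), 1), ((TNode W5 TLeaf (TNode W1 TLeaf TLeaf TLeaf) TLeaf), (-1)), ((TNode W5 TLeaf (TNode W4 TLeaf TLeaf TLeaf) TLeaf), (-1))],
    [((TNode W2 (TNode W1 TLeaf TLeaf TLeaf) TLeaf TLeaf), 1), ((TNode W1 TLeaf TLeaf (TNode W1 TLeaf TLeaf TLeaf)), (-1)), ((TNode W1 TLeaf TLeaf (TNode W2 TLeaf TLeaf TLeaf)), (-1))],
    [((TNode W2 (TNode W3 TLeaf TLeaf TLeaf) TLeaf TLeaf), 1), ((TNode W2 TLeaf (TNode W4 TLeaf TLeaf TLeaf) TLeaf), (-1)), ((TNode W3 TLeaf TLeaf (TNode W2 TLeaf TLeaf TLeaf)), (-1))],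
    [((TNode W2 TLeaf (TNode W1 TLeaf TLeaf TLeaf) TLeaf), 1), ((TNode W3 TLeaf TLeaf (TNode W2 TLeaf TLeaf TLeaf)), (-1)), ((TNode W3 TLeaf TLeaf (TNode W3 TLeaf TLeaf TLeaf)), (-1))],
    [((TNode W5 (TNode W1 TLeaf TLeaf TLeaf) TLeaf TLeaf), 1), ((TNode W4 TLeaf (TNode W2 TLeaf TLeaf TLeaf) TLeaf), (-1)), ((TNode W4 TLeaf (TNode W3 TLeaf TLeaf TLeaf) TLeaf), (-1))],
    [((TNode W1 TLeaf (TNode W2 TLeaf TLeaf TLeaf) TLeaf), 1), ((TNode W1 TLeaf TLeaf (TNode W2 TLeaf TLeaf TLeaf)), (-1)), ((TNode W1 TLeaf TLeaf (TNode W3 TLeaf TLeaf TLeaf)), (-1)), ((TNode W1 TLeaf TLeaf (TNode W5 TLeaf TLeaf TLeaf)), (-1))],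
    [((TNode W2 (TNode W2 TLeaf TLeaf TLeaf) TLeaf TLeaf), 1), ((TNode W2 TLeaf (TNode W5 TLeaf TLeaf TLeaf) TLeaf), (-1)), ((TNode W2 TLeaf TLeaf (TNode W1 TLeaf TLeaf TLeaf)), (-1)), ((TNode W2 TLeaf TLeaf (TNode W2 TLeaf TLeaf TLeaf)), (-1))],
    [((TNode W2 TLeaf (TNode W2 TLeaf TLeaf TLeaf) TLeaf), 1), ((TNode W2 TLeaf TLeaf (TNode W2 TLeaf TLeaf TLeaf)), (-1)), ((TNode W2 TLeaf TLeaf (TNode W3 TLeaf TLeaf TLeaf)), (-1)), ((TNode W2 TLeaf TLeaf (TNode W5 TLeaf TLeaf TLeaf)), (-1))],
    [((TNode W3 (TNode W3 TLeaf TLeaf TLeaf) TLeaf TLeaf), 1), ((TNode W3 TLeaf (TNode W1 TLeaf TLeaf TLeaf) TLeaf), (-1)), ((TNode W3 TLeaf (TNode W4 TLeaf TLeaf TLeaf) TLeaf), (-1)), ((TNode W3 TLeaf TLeaf (TNode W3 TLeaf TLeaf TLeaf)), (-1))],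
    [((TNode W3 TLeaf (TNode W3 TLeaf TLeaf TLeaf) TLeaf), 1), ((TNode W3 TLeaf (TNode W4 TLeaf TLeaf TLeaf) TLeaf), 1), ((TNode W3 TLeaf (TNode W5 TLeaf TLeaf TLeaf) TLeaf), 1), ((TNode W3 TLeaf TLeaf (TNode W4 TLeaf TLeaf TLeaf)), (-1))],
    [((TNode W4 (TNode W3 TLeaf TLeaf TLeaf) TLeaf TLeaf), 1), ((TNode W4 (TNode W4 TLeaf TLeaf TLeaf) TLeaf TLeaf), 1), ((TNode W4 (TNode W5 TLeaf TLeaf TLeaf) TLeaf TLeaf), 1), ((TNode W4 TLeaf (TNode W4 TLeaf TLeaf TLeaf) TLeaf), (-1))],
    [((TNode W4 (TNode W1 TLeaf TLeaf TLeaf) TLeaf TLeaf), 1), ((TNode W4 (TNode W4 TLeaf TLeaf TLeaf) TLeaf TLeaf), 1), ((TNode W4 TLeaf (TNode W3 TLeaf TLeaf TLeaf) TLeaf), 1), ((TNode W4 TLeaf TLeaf (TNode W4 TLeaf TLeaf TLeaf)), (-1))],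
    [((TNode W5 (TNode W2 TLeaf TLeaf TLeaf) TLeaf TLeaf), 1), ((TNode W5 TLeaf (TNode W2 TLeaf TLeaf TLeaf) TLeaf), (-1)), ((TNode W5 TLeaf (TNode W3 TLeaf TLeaf TLeaf) TLeaf), (-1)), ((TNode W5 TLeaf (TNode W5 TLeaf TLeaf TLeaf) TLeaf), (-1))],
    [((TNode W5 (TNode W5 TLeaf TLeaf TLeaf) TLeaf TLeaf), 1), ((TNode W5 TLeaf (TNode W1 TLeaf TLeaf TLeaf) TLeaf), 1), ((TNode W5 TLeaf (TNode W2 TLeaf TLeaf TLeaf) TLeaf), 1), ((TNode W5 TLeaf TLeaf (TNode W5 TLeaf TLeaf TLeaf)), (-1))],
    [((TNode W1 (TNode W2 TLeaf TLeaf TLeaf) TLeaf TLeaf), 1), ((TNode W1 (TNode W3 TLeaf TLeaf TLeaf) TLeaf TLeaf), 1), ((TNode W1 (TNode W5 TLeaf TLeaf TLeaf) TLeaf TLeaf), 1), ((TNode W5 TLeaf TLeaf (TNode W1 TLeaf TLeaf TLeaf)), (-1))],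
    [((TNode W1 TLeaf (TNode W4 TLeaf TLeaf TLeaf) TLeaf), 1), ((TNode W1 TLeaf (TNode W5 TLeaf TLeaf TLeaf) TLeaf), 1), ((TNode W4 TLeaf TLeaf (TNode W1 TLeaf TLeaf TLeaf)), (-1)), ((TNode W5 TLeaf TLeaf (TNode W1 TLeaf TLeaf TLeaf)), (-1))],
    [((TNode W3 (TNode W1 TLeaf TLeaf TLeaf) TLeaf TLeaf), 1), ((TNode W1 TLeaf (TNode W2 TLeaf TLeaf TLeaf) TLeaf), (-1)), ((TNode W1 TLeaf TLeaf (TNode W2 TLeaf TLeaf TLeaf)), 1), ((TNode W1 TLeaf TLeaf (TNode W4 TLeaf TLeaf TLeaf)), (-1))],
    [((TNode W1 TLeaf (TNode W1 TLeaf TLeaf TLeaf) TLeaf), 1), ((TNode W4 TLeaf TLeaf (TNode W2 TLeaf TLeaf TLeaf)), (-1)), ((TNode W5 TLeaf TLeaf (TNode W2 TLeaf TLeaf TLeaf)), (-1)), ((TNode W4 TLeaf TLeaf (TNode W3 TLeaf TLeaf TLeaf)), (-1)), ((TNode W5 TLeaf TLeaf (TNode W3 TLeaf TLeaf TLeaf)), (-1))],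
    [((TNode W3 (TNode W2 TLeaf TLeaf TLeaf) TLeaf TLeaf), 1), ((TNode W2 TLeaf (TNode W2 TLeaf TLeaf TLeaf) TLeaf), (-1)), ((TNode W3 TLeaf (TNode W2 TLeaf TLeaf TLeaf) TLeaf), (-1)), ((TNode W3 TLeaf (TNode W4 TLeaf TLeaf TLeaf) TLeaf), 1), ((TNode W2 TLeaf TLeaf (TNode W2 TLeaf TLeaf TLeaf)), 1), ((TNode W2 TLeaf TLeaf (TNode W4 TLeaf TLeaf TLeaf)), (-1)), ((TNode W3 TLeaf TLeaf (TNode W4 TLeaf TLeaf TLeaf)), (-1))],
    [((TNode W4 (TNode W2 TLeaf TLeaf TLeaf) TLeaf TLeaf), 1), ((TNode W5 (TNode W2 TLeaf TLeaf TLeaf) TLeaf TLeaf), 1), ((TNode W4 (TNode W4 TLeaf TLeaf TLeaf) TLeaf TLeaf), (-1)), ((TNode W5 TLeaf (TNode W2 TLeaf TLeaf TLeaf) TLeaf), (-1)), ((TNode W4 TLeaf (TNode W4 TLeaf TLeaf TLeaf) TLeaf), 1), ((TNode W5 TLeaf (TNode W4 TLeaf TLeaf TLeaf) TLeaf), 1), ((TNode W5 TLeaf TLeaf (TNode W4 TLeaf TLeaf TLeaf)), (-1))]]"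

definition DL :: "step list list" where
  "DL = [[([], 1, (BNode Succ BLeaf BLeaf), BLeaf, (BNode Prec BLeaf BLeaf), 1)],
    [([], 1, (BNode Prec BLeaf BLeaf), BLeaf, (BNode Prec BLeaf BLeaf), 1)],
    [([], 1, (BNode Succ BLeaf BLeaf), BLeaf, (BNode Succ BLeaf BLeaf), 1)],
    [([], 1, (BNode Prec BLeaf BLeaf), BLeaf, (BNode Succ BLeaf BLeaf), 1)],
    [([(False, Succ, BLeaf)], 1, (BNode Prec BLeaf BLeaf), BLeaf, BLeaf, (-1)),
      ([], 3, BLeaf, (BNode Prec BLeaf BLeaf), (BNode Prec BLeaf BLeaf), (-1))],
    [([(False, Prec, BLeaf)], 3, BLeaf, (BNode Prec BLeaf BLeaf), BLeaf, (-1))],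
    [([], 3, BLeaf, (BNode Succ (BNode Prec BLeaf BLeaf) BLeaf), BLeaf, 1),
      ([(False, Succ, BLeaf)], 3, (BNode Prec BLeaf BLeaf), BLeaf, BLeaf, 1),
      ([(True, Succ, BLeaf), (False, Succ, BLeaf)], 2, BLeaf, BLeaf, BLeaf, 1),
      ([], 3, (BNode Prec BLeaf (BNode Prec BLeaf BLeaf)), BLeaf, BLeaf, (-1)),
      ([(True, Succ, BLeaf)], 2, BLeaf, (BNode Prec BLeaf BLeaf), BLeaf, (-1)),
      ([(False, Prec, BLeaf), (True, Succ, BLeaf)], 2, BLeaf, BLeaf, BLeaf, (-1)),
      ([], 3, (BNode Succ BLeaf (BNode Prec BLeaf BLeaf)), BLeaf, BLeaf, (-1)),
      ([(True, Succ, BLeaf)], 1, BLeaf, (BNode Prec BLeaf BLeaf), BLeaf, (-1)),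
      ([], 3, BLeaf, (BNode Prec BLeaf BLeaf), (BNode Succ BLeaf BLeaf), (-1)),
      ([], 3, BLeaf, (BNode Prec (BNode Prec BLeaf BLeaf) BLeaf), BLeaf, 1),
      ([(True, Succ, BLeaf), (False, Succ, BLeaf)], 2, BLeaf, BLeaf, BLeaf, (-1)),
      ([(False, Prec, BLeaf), (True, Succ, BLeaf)], 2, BLeaf, BLeaf, BLeaf, 1)],
    [([], 3, BLeaf, BLeaf, (BNode Succ BLeaf (BNode Prec BLeaf BLeaf)), 1),
      ([], 3, BLeaf, (BNode Prec BLeaf BLeaf), (BNode Prec BLeaf BLeaf), (-1)),
      ([], 3, (BNode Succ BLeaf BLeaf), BLeaf, (BNode Prec BLeaf BLeaf), (-1)),
      ([(True, Succ, (BNode Prec BLeaf BLeaf))], 1, BLeaf, BLeaf, BLeaf, (-1)),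
      ([], 3, BLeaf, BLeaf, (BNode Succ BLeaf (BNode Prec BLeaf BLeaf)), (-1)),
      ([], 3, BLeaf, (BNode Prec BLeaf BLeaf), (BNode Prec BLeaf BLeaf), 1)],
    [([(False, Prec, BLeaf)], 1, (BNode Prec BLeaf BLeaf), BLeaf, BLeaf, 1),
      ([(False, Prec, BLeaf)], 1, (BNode Succ BLeaf BLeaf), BLeaf, BLeaf, 1),
      ([(False, Prec, BLeaf)], 3, BLeaf, BLeaf, (BNode Prec BLeaf BLeaf), (-1))],
    [([(True, Succ, BLeaf)], 1, (BNode Prec BLeaf BLeaf), BLeaf, BLeaf, 1),
      ([(True, Succ, BLeaf)], 1, (BNode Succ BLeaf BLeaf), BLeaf, BLeaf, 1),
      ([], 3, BLeaf, (BNode Succ BLeaf (BNode Prec BLeaf BLeaf)), BLeaf, 1),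
      ([(False, Succ, BLeaf)], 3, BLeaf, (BNode Prec BLeaf BLeaf), BLeaf, 1),
      ([], 3, (BNode Prec BLeaf BLeaf), (BNode Prec BLeaf BLeaf), BLeaf, (-1)),
      ([(True, Succ, BLeaf)], 2, BLeaf, BLeaf, (BNode Prec BLeaf BLeaf), (-1)),
      ([], 3, (BNode Succ BLeaf BLeaf), (BNode Prec BLeaf BLeaf), BLeaf, (-1)),
      ([(True, Succ, BLeaf)], 1, BLeaf, BLeaf, (BNode Prec BLeaf BLeaf), (-1)),
      ([], 3, BLeaf, BLeaf, (BNode Succ (BNode Prec BLeaf BLeaf) BLeaf), (-1)),
      ([], 3, BLeaf, (BNode Prec BLeaf (BNode Prec BLeaf BLeaf)), BLeaf, 1)],
    [([(True, Succ, BLeaf)], 1, (BNode Succ BLeaf BLeaf), BLeaf, BLeaf, 1),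
      ([], 3, BLeaf, BLeaf, (BNode Succ (BNode Prec BLeaf BLeaf) BLeaf), 1),
      ([], 3, BLeaf, (BNode Prec BLeaf (BNode Prec BLeaf BLeaf)), BLeaf, (-1)),
      ([], 3, (BNode Succ BLeaf BLeaf), (BNode Prec BLeaf BLeaf), BLeaf, (-1)),
      ([(True, Succ, BLeaf)], 1, BLeaf, BLeaf, (BNode Prec BLeaf BLeaf), (-1)),
      ([], 3, BLeaf, BLeaf, (BNode Succ (BNode Prec BLeaf BLeaf) BLeaf), (-1)),
      ([], 3, BLeaf, (BNode Prec BLeaf (BNode Prec BLeaf BLeaf)), BLeaf, 1)],
    [([(False, Prec, BLeaf), (False, Succ, BLeaf)], 3, BLeaf, BLeaf, BLeaf, 1),
      ([(False, Succ, BLeaf)], 2, BLeaf, (BNode Succ BLeaf BLeaf), BLeaf, 1),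
      ([(False, Prec, BLeaf), (False, Succ, BLeaf)], 1, BLeaf, BLeaf, BLeaf, 1),
      ([(False, Prec, BLeaf), (False, Succ, BLeaf)], 3, BLeaf, BLeaf, BLeaf, (-1))],
    [([(False, Prec, BLeaf), (False, Prec, BLeaf)], 3, BLeaf, BLeaf, BLeaf, 1),
      ([(False, Prec, BLeaf)], 2, BLeaf, (BNode Succ BLeaf BLeaf), BLeaf, 1),
      ([(False, Prec, BLeaf), (False, Prec, BLeaf)], 1, BLeaf, BLeaf, BLeaf, 1),
      ([(False, Prec, BLeaf), (False, Prec, BLeaf)], 3, BLeaf, BLeaf, BLeaf, (-1))],
    [([(False, Prec, BLeaf), (True, Succ, BLeaf)], 3, BLeaf, BLeaf, BLeaf, 1),
      ([(True, Succ, BLeaf)], 2, BLeaf, (BNode Succ BLeaf BLeaf), BLeaf, 1),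
      ([(False, Prec, BLeaf), (True, Succ, BLeaf)], 1, BLeaf, BLeaf, BLeaf, 1),
      ([(False, Prec, BLeaf), (True, Succ, BLeaf)], 3, BLeaf, BLeaf, BLeaf, (-1))],
    [([], 1, BLeaf, (BNode Prec BLeaf BLeaf), (BNode Prec BLeaf BLeaf), 1),
      ([(False, Succ, BLeaf)], 2, BLeaf, BLeaf, (BNode Prec BLeaf BLeaf), 1)],
    [([(False, Prec, BLeaf)], 1, (BNode Succ BLeaf BLeaf), BLeaf, BLeaf, (-1)),
      ([(False, Prec, BLeaf)], 3, BLeaf, BLeaf, (BNode Prec BLeaf BLeaf), 1),
      ([], 2, BLeaf, (BNode Succ BLeaf BLeaf), (BNode Prec BLeaf BLeaf), 1),
      ([(False, Prec, BLeaf)], 1, BLeaf, BLeaf, (BNode Prec BLeaf BLeaf), 1),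
      ([(False, Prec, BLeaf)], 3, BLeaf, BLeaf, (BNode Prec BLeaf BLeaf), (-1))],
    [([(False, Prec, BLeaf)], 1, BLeaf, (BNode Prec BLeaf BLeaf), BLeaf, 1),
      ([(False, Succ, BLeaf), (False, Prec, BLeaf)], 2, BLeaf, BLeaf, BLeaf, 1)],
    [([(True, Succ, BLeaf)], 1, BLeaf, (BNode Prec BLeaf BLeaf), BLeaf, 1),
      ([], 3, BLeaf, (BNode Prec BLeaf (BNode Prec BLeaf BLeaf)), BLeaf, 1),
      ([], 3, BLeaf, (BNode Prec BLeaf (BNode Succ BLeaf BLeaf)), BLeaf, 1),
      ([], 3, BLeaf, (BNode Prec (BNode Prec BLeaf BLeaf) BLeaf), BLeaf, (-1)),
      ([(True, Succ, BLeaf), (False, Succ, BLeaf)], 2, BLeaf, BLeaf, BLeaf, 1),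
      ([(False, Prec, BLeaf), (True, Succ, BLeaf)], 2, BLeaf, BLeaf, BLeaf, (-1))],
    [([(False, Succ, BLeaf)], 2, BLeaf, (BNode Prec BLeaf BLeaf), BLeaf, 1),
      ([(False, Prec, BLeaf), (False, Succ, BLeaf)], 2, BLeaf, BLeaf, BLeaf, 1)],
    [([(False, Prec, BLeaf)], 1, (BNode Prec BLeaf BLeaf), BLeaf, BLeaf, (-1)),
      ([], 2, BLeaf, (BNode Prec BLeaf BLeaf), (BNode Prec BLeaf BLeaf), 1),
      ([(False, Prec, BLeaf)], 2, BLeaf, BLeaf, (BNode Prec BLeaf BLeaf), 1)],
    [([(False, Prec, BLeaf)], 2, BLeaf, (BNode Prec BLeaf BLeaf), BLeaf, 1),
      ([(False, Prec, BLeaf), (False, Prec, BLeaf)], 2, BLeaf, BLeaf, BLeaf, 1)],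
    [([(False, Prec, BLeaf)], 3, BLeaf, (BNode Prec BLeaf BLeaf), BLeaf, 1),
      ([(False, Prec, BLeaf)], 3, (BNode Succ BLeaf BLeaf), BLeaf, BLeaf, 1),
      ([(True, Succ, BLeaf), (False, Prec, BLeaf)], 1, BLeaf, BLeaf, BLeaf, 1),
      ([(False, Prec, BLeaf)], 3, BLeaf, BLeaf, (BNode Succ BLeaf BLeaf), 1),
      ([(False, Prec, BLeaf)], 3, BLeaf, (BNode Prec BLeaf BLeaf), BLeaf, (-1)),
      ([], 2, BLeaf, (BNode Succ BLeaf BLeaf), (BNode Succ BLeaf BLeaf), 1),
      ([(False, Prec, BLeaf)], 1, BLeaf, BLeaf, (BNode Succ BLeaf BLeaf), 1),
      ([(False, Prec, BLeaf)], 3, BLeaf, BLeaf, (BNode Succ BLeaf BLeaf), (-1))],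
    [([(False, Succ, BLeaf), (False, Prec, BLeaf)], 3, BLeaf, BLeaf, BLeaf, 1),
      ([(False, Prec, BLeaf)], 3, (BNode Prec BLeaf BLeaf), BLeaf, BLeaf, (-1)),
      ([(True, Succ, BLeaf), (False, Prec, BLeaf)], 2, BLeaf, BLeaf, BLeaf, (-1)),
      ([(False, Prec, BLeaf)], 3, (BNode Succ BLeaf BLeaf), BLeaf, BLeaf, (-1)),
      ([(True, Succ, BLeaf), (False, Prec, BLeaf)], 1, BLeaf, BLeaf, BLeaf, (-1)),
      ([(False, Prec, BLeaf)], 3, BLeaf, BLeaf, (BNode Succ BLeaf BLeaf), (-1)),
      ([(False, Prec, BLeaf)], 3, BLeaf, (BNode Prec BLeaf BLeaf), BLeaf, 1)],
    [([], 3, BLeaf, (BNode Succ (BNode Succ BLeaf BLeaf) BLeaf), BLeaf, 1),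
      ([(False, Succ, BLeaf)], 3, (BNode Succ BLeaf BLeaf), BLeaf, BLeaf, 1),
      ([(True, Succ, BLeaf), (False, Succ, BLeaf)], 1, BLeaf, BLeaf, BLeaf, 1),
      ([(False, Succ, BLeaf)], 3, BLeaf, BLeaf, (BNode Succ BLeaf BLeaf), 1),
      ([(False, Succ, BLeaf)], 3, BLeaf, (BNode Prec BLeaf BLeaf), BLeaf, (-1)),
      ([(False, Prec, BLeaf), (True, Succ, BLeaf)], 3, BLeaf, BLeaf, BLeaf, (-1)),
      ([], 3, (BNode Prec BLeaf (BNode Succ BLeaf BLeaf)), BLeaf, BLeaf, (-1)),
      ([(True, Succ, BLeaf)], 2, BLeaf, (BNode Succ BLeaf BLeaf), BLeaf, (-1)),
      ([(False, Prec, BLeaf), (True, Succ, BLeaf)], 1, BLeaf, BLeaf, BLeaf, (-1)),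
      ([(False, Prec, BLeaf), (True, Succ, BLeaf)], 3, BLeaf, BLeaf, BLeaf, 1),
      ([], 3, (BNode Succ (BNode Prec BLeaf BLeaf) BLeaf), BLeaf, BLeaf, (-1)),
      ([(True, Succ, BLeaf)], 1, (BNode Prec BLeaf BLeaf), BLeaf, BLeaf, (-1)),
      ([], 3, (BNode Prec BLeaf BLeaf), BLeaf, (BNode Succ BLeaf BLeaf), (-1)),
      ([(True, Succ, (BNode Succ BLeaf BLeaf))], 2, BLeaf, BLeaf, BLeaf, (-1)),
      ([], 3, (BNode Prec BLeaf BLeaf), (BNode Prec BLeaf BLeaf), BLeaf, 1),
      ([(True, Succ, BLeaf)], 2, BLeaf, BLeaf, (BNode Prec BLeaf BLeaf), 1),
      ([], 3, (BNode Succ (BNode Succ BLeaf BLeaf) BLeaf), BLeaf, BLeaf, (-1)),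
      ([(True, Succ, BLeaf)], 1, (BNode Succ BLeaf BLeaf), BLeaf, BLeaf, (-1)),
      ([], 3, (BNode Succ BLeaf BLeaf), BLeaf, (BNode Succ BLeaf BLeaf), (-1)),
      ([(True, Succ, (BNode Succ BLeaf BLeaf))], 1, BLeaf, BLeaf, BLeaf, (-1)),
      ([], 3, BLeaf, BLeaf, (BNode Succ BLeaf (BNode Succ BLeaf BLeaf)), (-1)),
      ([], 3, BLeaf, (BNode Prec BLeaf BLeaf), (BNode Succ BLeaf BLeaf), 1),
      ([], 3, (BNode Succ BLeaf BLeaf), (BNode Prec BLeaf BLeaf), BLeaf, 1),
      ([(True, Succ, BLeaf)], 1, BLeaf, BLeaf, (BNode Prec BLeaf BLeaf), 1),
      ([], 3, BLeaf, BLeaf, (BNode Succ (BNode Prec BLeaf BLeaf) BLeaf), 1),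
      ([], 3, BLeaf, (BNode Prec BLeaf (BNode Prec BLeaf BLeaf)), BLeaf, (-1))],
    [([], 3, BLeaf, BLeaf, (BNode Succ (BNode Succ BLeaf BLeaf) BLeaf), 1),
      ([(False, Succ, BLeaf), (False, Succ, BLeaf)], 3, BLeaf, BLeaf, BLeaf, 1),
      ([(False, Succ, (BNode Prec BLeaf BLeaf))], 3, BLeaf, BLeaf, BLeaf, (-1)),
      ([], 3, BLeaf, (BNode Prec BLeaf (BNode Succ BLeaf BLeaf)), BLeaf, (-1)),
      ([], 3, (BNode Succ BLeaf (BNode Prec BLeaf BLeaf)), BLeaf, BLeaf, (-1)),
      ([(True, Succ, BLeaf)], 1, BLeaf, (BNode Prec BLeaf BLeaf), BLeaf, (-1)),
      ([], 3, BLeaf, (BNode Prec BLeaf BLeaf), (BNode Succ BLeaf BLeaf), (-1)),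
      ([], 3, BLeaf, (BNode Prec (BNode Prec BLeaf BLeaf) BLeaf), BLeaf, 1),
      ([(True, Succ, BLeaf), (False, Succ, BLeaf)], 2, BLeaf, BLeaf, BLeaf, (-1)),
      ([(False, Prec, BLeaf), (True, Succ, BLeaf)], 2, BLeaf, BLeaf, BLeaf, 1),
      ([], 3, (BNode Succ (BNode Succ BLeaf BLeaf) BLeaf), BLeaf, BLeaf, (-1)),
      ([(True, Succ, BLeaf)], 1, (BNode Succ BLeaf BLeaf), BLeaf, BLeaf, (-1)),
      ([], 3, (BNode Succ BLeaf BLeaf), BLeaf, (BNode Succ BLeaf BLeaf), (-1)),
      ([(True, Succ, (BNode Succ BLeaf BLeaf))], 1, BLeaf, BLeaf, BLeaf, (-1)),
      ([], 3, BLeaf, BLeaf, (BNode Succ BLeaf (BNode Succ BLeaf BLeaf)), (-1)),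
      ([], 3, BLeaf, (BNode Prec BLeaf BLeaf), (BNode Succ BLeaf BLeaf), 1),
      ([], 3, (BNode Succ BLeaf BLeaf), (BNode Prec BLeaf BLeaf), BLeaf, 1),
      ([(True, Succ, BLeaf)], 1, BLeaf, BLeaf, (BNode Prec BLeaf BLeaf), 1),
      ([], 3, BLeaf, BLeaf, (BNode Succ (BNode Prec BLeaf BLeaf) BLeaf), 1),
      ([], 3, BLeaf, (BNode Prec BLeaf (BNode Prec BLeaf BLeaf)), BLeaf, (-1))],
    [([(True, Succ, BLeaf)], 2, BLeaf, (BNode Prec BLeaf BLeaf), BLeaf, 1),
      ([(False, Prec, BLeaf), (True, Succ, BLeaf)], 2, BLeaf, BLeaf, BLeaf, 1)],
    [([(True, Succ, BLeaf)], 1, (BNode Prec BLeaf BLeaf), BLeaf, BLeaf, 1),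
      ([], 3, (BNode Prec BLeaf BLeaf), (BNode Prec BLeaf BLeaf), BLeaf, (-1)),
      ([(True, Succ, BLeaf)], 2, BLeaf, BLeaf, (BNode Prec BLeaf BLeaf), (-1))],
    [([], 3, (BNode Prec BLeaf BLeaf), BLeaf, (BNode Prec BLeaf BLeaf), (-1)),
      ([(True, Succ, (BNode Prec BLeaf BLeaf))], 2, BLeaf, BLeaf, BLeaf, (-1))],
    [([(False, Succ, BLeaf)], 1, (BNode Prec BLeaf BLeaf), BLeaf, BLeaf, 1),
      ([(False, Succ, BLeaf)], 1, (BNode Succ BLeaf BLeaf), BLeaf, BLeaf, 1),
      ([(False, Succ, BLeaf)], 3, BLeaf, BLeaf, (BNode Prec BLeaf BLeaf), (-1)),
      ([], 3, BLeaf, BLeaf, (BNode Succ BLeaf (BNode Prec BLeaf BLeaf)), 1)],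
    [([], 1, BLeaf, (BNode Prec BLeaf BLeaf), (BNode Succ BLeaf BLeaf), 1),
      ([(False, Prec, BLeaf), (False, Succ, BLeaf)], 3, BLeaf, BLeaf, BLeaf, 1),
      ([(False, Succ, BLeaf)], 2, BLeaf, BLeaf, (BNode Succ BLeaf BLeaf), 1),
      ([(False, Succ, BLeaf)], 2, BLeaf, (BNode Prec BLeaf BLeaf), BLeaf, (-1)),
      ([(False, Prec, BLeaf), (False, Succ, BLeaf)], 2, BLeaf, BLeaf, BLeaf, (-1))],
    [([(False, Succ, BLeaf)], 1, BLeaf, (BNode Prec BLeaf BLeaf), BLeaf, 1),
      ([(False, Succ, BLeaf), (False, Succ, BLeaf)], 2, BLeaf, BLeaf, BLeaf, 1),
      ([], 3, BLeaf, BLeaf, (BNode Prec BLeaf (BNode Prec BLeaf BLeaf)), 1),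
      ([], 3, BLeaf, BLeaf, (BNode Prec BLeaf (BNode Succ BLeaf BLeaf)), 1)],
    [([(False, Prec, BLeaf), (False, Prec, BLeaf)], 3, BLeaf, BLeaf, BLeaf, 1),
      ([(False, Prec, BLeaf)], 2, BLeaf, (BNode Prec BLeaf BLeaf), BLeaf, (-1)),
      ([(False, Prec, BLeaf), (False, Prec, BLeaf)], 2, BLeaf, BLeaf, BLeaf, (-1)),
      ([(False, Succ, BLeaf), (False, Prec, BLeaf)], 3, BLeaf, BLeaf, BLeaf, 1),
      ([(False, Prec, BLeaf)], 3, (BNode Succ BLeaf BLeaf), BLeaf, BLeaf, (-1)),
      ([(True, Succ, BLeaf), (False, Prec, BLeaf)], 1, BLeaf, BLeaf, BLeaf, (-1)),
      ([(False, Prec, BLeaf)], 3, BLeaf, BLeaf, (BNode Succ BLeaf BLeaf), (-1)),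
      ([(False, Prec, BLeaf)], 3, BLeaf, (BNode Prec BLeaf BLeaf), BLeaf, 1),
      ([], 2, BLeaf, (BNode Prec BLeaf BLeaf), (BNode Succ BLeaf BLeaf), 1),
      ([(False, Prec, BLeaf)], 2, BLeaf, BLeaf, (BNode Succ BLeaf BLeaf), 1)],
    [([(False, Succ, (BNode Prec BLeaf BLeaf))], 3, BLeaf, BLeaf, BLeaf, 1),
      ([(False, Prec, BLeaf), (True, Succ, BLeaf)], 3, BLeaf, BLeaf, BLeaf, (-1)),
      ([(True, Succ, BLeaf)], 2, BLeaf, (BNode Prec BLeaf BLeaf), BLeaf, 1),
      ([(False, Prec, BLeaf), (True, Succ, BLeaf)], 2, BLeaf, BLeaf, BLeaf, 1),
      ([], 3, BLeaf, (BNode Succ (BNode Succ BLeaf BLeaf) BLeaf), BLeaf, (-1)),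
      ([(False, Succ, BLeaf)], 3, (BNode Succ BLeaf BLeaf), BLeaf, BLeaf, (-1)),
      ([(True, Succ, BLeaf), (False, Succ, BLeaf)], 1, BLeaf, BLeaf, BLeaf, (-1)),
      ([(False, Succ, BLeaf)], 3, BLeaf, BLeaf, (BNode Succ BLeaf BLeaf), (-1)),
      ([(False, Succ, BLeaf)], 3, BLeaf, (BNode Prec BLeaf BLeaf), BLeaf, 1),
      ([(False, Prec, BLeaf), (True, Succ, BLeaf)], 3, BLeaf, BLeaf, BLeaf, 1),
      ([], 3, (BNode Prec BLeaf (BNode Prec BLeaf BLeaf)), BLeaf, BLeaf, (-1)),
      ([(True, Succ, BLeaf)], 2, BLeaf, (BNode Prec BLeaf BLeaf), BLeaf, (-1)),
      ([(False, Prec, BLeaf), (True, Succ, BLeaf)], 2, BLeaf, BLeaf, BLeaf, (-1)),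
      ([], 3, (BNode Succ (BNode Succ BLeaf BLeaf) BLeaf), BLeaf, BLeaf, 1),
      ([(True, Succ, BLeaf)], 1, (BNode Succ BLeaf BLeaf), BLeaf, BLeaf, 1),
      ([], 3, (BNode Succ BLeaf BLeaf), BLeaf, (BNode Succ BLeaf BLeaf), 1),
      ([(True, Succ, (BNode Succ BLeaf BLeaf))], 1, BLeaf, BLeaf, BLeaf, 1),
      ([], 3, BLeaf, BLeaf, (BNode Succ BLeaf (BNode Succ BLeaf BLeaf)), 1),
      ([], 3, BLeaf, (BNode Prec BLeaf BLeaf), (BNode Succ BLeaf BLeaf), (-1)),
      ([], 3, (BNode Succ BLeaf BLeaf), (BNode Prec BLeaf BLeaf), BLeaf, (-1)),
      ([(True, Succ, BLeaf)], 1, BLeaf, BLeaf, (BNode Prec BLeaf BLeaf), (-1)),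
      ([], 3, BLeaf, BLeaf, (BNode Succ (BNode Prec BLeaf BLeaf) BLeaf), (-1)),
      ([], 3, BLeaf, (BNode Prec BLeaf (BNode Prec BLeaf BLeaf)), BLeaf, 1)]]"

definition PHL :: "nat list list list" where
  "PHL = [[[3,1,0,2,4], [3,1,0,4,2], [3,1,2,0,4], [3,1,2,4,0], [3,1,4,0,2], [3,1,4,2,0], [3,4,1,0,2], [3,4,1,2,0]],
    [[1,0,2,3,4], [1,0,3,2,4], [1,0,3,4,2], [1,2,0,3,4], [1,2,3,0,4], [1,2,3,4,0], [1,3,0,2,4], [1,3,0,4,2], [1,3,2,0,4], [1,3,2,4,0], [1,3,4,0,2], [1,3,4,2,0]],
    [[1,0,2,4,3], [1,0,4,2,3], [1,0,4,3,2], [1,2,0,4,3], [1,2,4,0,3], [1,2,4,3,0], [1,4,0,2,3], [1,4,0,3,2], [1,4,2,0,3], [1,4,2,3,0], [1,4,3,0,2], [1,4,3,2,0]],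
    [[4,3,1,0,2], [4,3,1,2,0]],
    [[4,1,0,2,3], [4,1,0,3,2], [4,1,2,0,3], [4,1,2,3,0], [4,1,3,0,2], [4,1,3,2,0]],
    [[3,0,1,2,4], [3,0,1,4,2], [3,0,4,1,2], [3,4,0,1,2]],
    [[0,1,2,3,4], [0,1,3,2,4], [0,1,3,4,2], [0,3,1,2,4], [0,3,1,4,2], [0,3,4,1,2]],
    [[0,1,2,4,3], [0,1,4,2,3], [0,1,4,3,2], [0,4,1,2,3], [0,4,1,3,2], [0,4,3,1,2]],
    [[4,3,0,1,2]],
    [[4,0,1,2,3], [4,0,1,3,2], [4,0,3,1,2]],
    [[3,0,2,1,4], [3,0,2,4,1], [3,0,4,2,1], [3,4,0,2,1]],
    [[0,2,1,3,4], [0,2,3,1,4], [0,2,3,4,1], [0,3,2,1,4], [0,3,2,4,1], [0,3,4,2,1]],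
    [[0,2,1,4,3], [0,2,4,1,3], [0,2,4,3,1], [0,4,2,1,3], [0,4,2,3,1], [0,4,3,2,1]],
    [[4,3,0,2,1]],
    [[4,0,2,1,3], [4,0,2,3,1], [4,0,3,2,1]],
    [[3,2,1,0,4], [3,2,1,4,0], [3,2,4,1,0], [3,4,2,1,0]],
    [[2,1,0,3,4], [2,1,3,0,4], [2,1,3,4,0], [2,3,1,0,4], [2,3,1,4,0], [2,3,4,1,0]],
    [[2,1,0,4,3], [2,1,4,0,3], [2,1,4,3,0], [2,4,1,0,3], [2,4,1,3,0], [2,4,3,1,0]],
    [[4,3,2,1,0]],
    [[4,2,1,0,3], [4,2,1,3,0], [4,2,3,1,0]],
    [[3,2,0,1,4], [3,2,0,4,1], [3,2,4,0,1], [3,4,2,0,1]],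
    [[2,0,1,3,4], [2,0,3,1,4], [2,0,3,4,1], [2,3,0,1,4], [2,3,0,4,1], [2,3,4,0,1]],
    [[2,0,1,4,3], [2,0,4,1,3], [2,0,4,3,1], [2,4,0,1,3], [2,4,0,3,1], [2,4,3,0,1]],
    [[4,3,2,0,1]],
    [[4,2,0,1,3], [4,2,0,3,1], [4,2,3,0,1]],
    [[2,0,1,3,4], [2,0,1,4,3], [2,0,3,1,4], [2,0,3,4,1], [2,0,4,1,3], [2,0,4,3,1], [2,1,0,3,4], [2,1,0,4,3], [2,1,3,0,4], [2,1,3,4,0], [2,1,4,0,3], [2,1,4,3,0], [2,3,0,1,4], [2,3,0,4,1], [2,3,1,0,4], [2,3,1,4,0], [2,3,4,0,1], [2,3,4,1,0], [2,4,0,1,3], [2,4,0,3,1], [2,4,1,0,3], [2,4,1,3,0], [2,4,3,0,1], [2,4,3,1,0]],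
    [[0,2,1,3,4], [0,2,1,4,3], [0,2,3,1,4], [0,2,3,4,1], [0,2,4,1,3], [0,2,4,3,1]],
    [[0,4,2,1,3], [0,4,2,3,1]],
    [[4,2,0,1,3], [4,2,0,3,1], [4,2,1,0,3], [4,2,1,3,0], [4,2,3,0,1], [4,2,3,1,0]],
    [[4,0,2,1,3], [4,0,2,3,1]],
    [[1,0,2,3,4], [1,0,2,4,3], [1,0,4,2,3], [1,2,0,3,4], [1,2,0,4,3], [1,2,3,0,4], [1,2,3,4,0], [1,2,4,0,3], [1,2,4,3,0], [1,4,0,2,3], [1,4,2,0,3], [1,4,2,3,0]],
    [[0,1,2,3,4], [0,1,2,4,3], [0,1,4,2,3]],
    [[0,4,1,2,3]],
    [[4,1,0,2,3], [4,1,2,0,3], [4,1,2,3,0]],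
    [[4,0,1,2,3]],
    [[1,0,3,2,4], [1,0,3,4,2], [1,0,4,3,2], [1,3,0,2,4], [1,3,0,4,2], [1,3,2,0,4], [1,3,2,4,0], [1,3,4,0,2], [1,3,4,2,0], [1,4,0,3,2], [1,4,3,0,2], [1,4,3,2,0]],
    [[0,1,3,2,4], [0,1,3,4,2], [0,1,4,3,2]],
    [[0,4,1,3,2]],
    [[4,1,0,3,2], [4,1,3,0,2], [4,1,3,2,0]],
    [[4,0,1,3,2]],
    [[3,0,2,1,4], [3,0,2,4,1], [3,0,4,2,1], [3,2,0,1,4], [3,2,0,4,1], [3,2,1,0,4], [3,2,1,4,0], [3,2,4,0,1], [3,2,4,1,0], [3,4,0,2,1], [3,4,2,0,1], [3,4,2,1,0]],
    [[0,3,2,1,4], [0,3,2,4,1], [0,3,4,2,1]],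
    [[0,4,3,2,1]],
    [[4,3,0,2,1], [4,3,2,0,1], [4,3,2,1,0]],
    [[4,0,3,2,1]],
    [[3,0,1,2,4], [3,0,1,4,2], [3,0,4,1,2], [3,1,0,2,4], [3,1,0,4,2], [3,1,2,0,4], [3,1,2,4,0], [3,1,4,0,2], [3,1,4,2,0], [3,4,0,1,2], [3,4,1,0,2], [3,4,1,2,0]],
    [[0,3,1,2,4], [0,3,1,4,2], [0,3,4,1,2]],
    [[0,4,3,1,2]],
    [[4,3,0,1,2], [4,3,1,0,2], [4,3,1,2,0]],
    [[4,0,3,1,2]],
    [[1,0,3,2,4], [1,0,3,4,2], [1,3,0,2,4], [1,3,0,4,2], [1,3,2,0,4], [1,3,2,4,0], [1,3,4,0,2], [1,3,4,2,0]],
    [[0,1,3,2,4], [0,1,3,4,2]],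
    [[0,3,1,2,4], [0,3,1,4,2], [0,3,2,1,4], [0,3,2,4,1], [0,3,4,1,2], [0,3,4,2,1]],
    [[3,1,0,2,4], [3,1,0,4,2], [3,1,2,0,4], [3,1,2,4,0], [3,1,4,0,2], [3,1,4,2,0], [3,2,1,0,4], [3,2,1,4,0], [3,2,4,1,0], [3,4,1,0,2], [3,4,1,2,0], [3,4,2,1,0]],
    [[3,0,1,2,4], [3,0,1,4,2], [3,0,2,1,4], [3,0,2,4,1], [3,0,4,1,2], [3,0,4,2,1], [3,2,0,1,4], [3,2,0,4,1], [3,2,4,0,1], [3,4,0,1,2], [3,4,0,2,1], [3,4,2,0,1]],
    [[1,0,2,3,4], [1,2,0,3,4], [1,2,3,0,4], [1,2,3,4,0]],
    [[0,1,2,3,4]],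
    [[0,2,1,3,4], [0,2,3,1,4], [0,2,3,4,1]],
    [[2,1,0,3,4], [2,1,3,0,4], [2,1,3,4,0], [2,3,1,0,4], [2,3,1,4,0], [2,3,4,1,0]],
    [[2,0,1,3,4], [2,0,3,1,4], [2,0,3,4,1], [2,3,0,1,4], [2,3,0,4,1], [2,3,4,0,1]],
    [[1,0,2,4,3], [1,2,0,4,3], [1,2,4,0,3], [1,2,4,3,0]],
    [[0,1,2,4,3]],
    [[0,2,1,4,3], [0,2,4,1,3], [0,2,4,3,1]],
    [[2,1,0,4,3], [2,1,4,0,3], [2,1,4,3,0], [2,4,1,0,3], [2,4,1,3,0], [2,4,3,1,0]],
    [[2,0,1,4,3], [2,0,4,1,3], [2,0,4,3,1], [2,4,0,1,3], [2,4,0,3,1], [2,4,3,0,1]],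
    [[1,0,4,3,2], [1,4,0,3,2], [1,4,3,0,2], [1,4,3,2,0]],
    [[0,1,4,3,2]],
    [[0,4,1,3,2], [0,4,3,1,2], [0,4,3,2,1]],
    [[4,1,0,3,2], [4,1,3,0,2], [4,1,3,2,0], [4,3,1,0,2], [4,3,1,2,0], [4,3,2,1,0]],
    [[4,0,1,3,2], [4,0,3,1,2], [4,0,3,2,1], [4,3,0,1,2], [4,3,0,2,1], [4,3,2,0,1]],
    [[1,0,4,2,3], [1,4,0,2,3], [1,4,2,0,3], [1,4,2,3,0]],
    [[0,1,4,2,3]],
    [[0,4,1,2,3], [0,4,2,1,3], [0,4,2,3,1]],
    [[4,1,0,2,3], [4,1,2,0,3], [4,1,2,3,0], [4,2,1,0,3], [4,2,1,3,0], [4,2,3,1,0]],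
    [[4,0,1,2,3], [4,0,2,1,3], [4,0,2,3,1], [4,2,0,1,3], [4,2,0,3,1], [4,2,3,0,1]]]"

lemma rels33_evl: "(rels33 :: ('k::field_char_0) ft list) = map evl RL"
  by (simp add: rels33_def RL_def A_def B_def C_def mon_def evl_Cons single_uminus algebra_simps)

lemma RL_checks: "list_all2 (\<lambda>xs D. check (map (\<lambda>(t,c). (dtree t, c)) xs) (concat (map steplist D))) RL DL"
  by code_simp

lemma RL_in_T75: "list_all (\<lambda>xs. list_all (\<lambda>(t,c). t \<in> set T75) xs) RL"
  by code_simp

lemma T75_arity: "list_all (\<lambda>t. tarity t = 5) T75"
  by code_simp

lemma PHL_tab: "map (\<lambda>t. phi (dtree t)) T75 = map mset PHL"
  by code_simp



lemma len_RL: "length RL = 33" by (simp add: RL_def)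
lemma len_DL: "length DL = 33" by (simp add: DL_def)
lemma len_rels: "length (rels33 :: ('k::field_char_0) ft list) = 33" by (simp add: rels33_def)

lemma keys_evl: "Poly_Mapping.keys (evl xs :: 'a \<Rightarrow>\<^sub>0 'k::field_char_0) \<subseteq> fst ` set xs"
proof (induction xs)
  case Nil then show ?case by simp
next
  case (Cons x xs)
  obtain t c where x: "x = (t, c)" by (cases x) auto
  have "Poly_Mapping.keys (evl (x#xs) :: 'a \<Rightarrow>\<^sub>0 'k) \<subseteq>
     Poly_Mapping.keys (Poly_Mapping.single t (of_int c) :: 'a \<Rightarrow>\<^sub>0 'k) \<union> Poly_Mapping.keys (evl xs :: 'a \<Rightarrow>\<^sub>0 'k)"
    using keys_add[of "Poly_Mapping.single t (of_int c) :: 'a \<Rightarrow>\<^sub>0 'k" "evl xs"] by (simp add: x evl_Cons)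
  then show ?case using Cons.IH x by (auto split: if_splits)
qed

lemma T75_arity': "t \<in> set T75 \<Longrightarrow> tarity t = 5"
  using T75_arity by (simp add: list_all_iff)

lemma RL_in_T75': "i < 33 \<Longrightarrow> (t,c) \<in> set (RL!i) \<Longrightarrow> t \<in> set T75"
  using RL_in_T75 len_RL nth_mem[of i RL] by (auto simp: list_all_iff)

lemma rels_nth: "i < 33 \<Longrightarrow> (rels33 :: ('k::field_char_0) ft list) ! i = evl (RL ! i)"
  by (simp add: rels33_evl len_RL)

lemma rel_ker: "i < 33 \<Longrightarrow> (rels33 :: ('k::field_char_0) ft list) ! i \<in> ker_d5"
proof -
  assume i: "i < 33"
  have "\<forall>t\<in>Poly_Mapping.keys (evl (RL!i) :: 'k ft). tarity t = 5"
  proof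
    fix t assume "t \<in> Poly_Mapping.keys (evl (RL!i) :: 'k ft)"
    then have "t \<in> fst ` set (RL!i)" by (rule keys_evl[THEN subsetD])
    then obtain c where "(t,c) \<in> set (RL!i)" by force
    then show "tarity t = 5" using RL_in_T75'[OF i] T75_arity' by blast
  qed
  then have "(rels33 :: 'k ft list) ! i \<in> FT5" by (simp add: FT5_def rels_nth[OF i])
  moreover have "dlin ((rels33 :: 'k ft list) ! i) \<in> dend_ideal"
  proof -
    have "check (map (\<lambda>(t,c). (dtree t, c)) (RL!i)) (concat (map steplist (DL!i)))"
      using list_all2_nthD[OF RL_checks, of i] i len_RL by simp
    then have "(evl (map (\<lambda>(t,c). (dtree t, c)) (RL!i)) :: 'k bt) \<in> dend_ideal" by (rule deriv_check)
    then show ?thesis by (simp add: rels_nth[OF i] dlin_Lmap Lmap_evl)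
  qed
  ultimately show ?thesis by (simp add: ker_d5_def)
qed

lemma lookup_comb: "Poly_Mapping.lookup (\<Sum>i<33. smul (a i) ((rels33 :: ('k::field_char_0) ft list) ! i)) s
   = (\<Sum>i<33. a i * of_int (sumc (RL!i) s))"
  unfolding lookup_sum by (rule sum.cong) (auto simp: lookup_smul rels_nth lookup_evl)

lemma FF_dlin: "FF w (dlin p) = Lf (\<lambda>t. of_nat (count (phi (dtree t)) w)) p"
proof -
  have "FF w (dlin p) = (\<Sum>t\<in>Poly_Mapping.keys p. Poly_Mapping.lookup p t * of_nat (count (phi (dtree t)) w))"
    by (simp add: FF_def dlin_def Lf_sum Lf_single)
  then show ?thesis by (simp add: Lf_def)
qed

lemma tarity_ge1: "tarity t \<ge> 1" by (induction t) auto
lemma tarity_odd: "odd (tarity t)" by (induction t) auto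
lemma tar1: "tarity t = 1 \<Longrightarrow> t = TLeaf"
proof (cases t)
  case (TNode g a b c)
  assume "tarity t = 1"
  then show ?thesis using TNode tarity_ge1[of a] tarity_ge1[of b] tarity_ge1[of c] by simp
qed simp
lemma tar3: "tarity t = 3 \<Longrightarrow> \<exists>g. t = TNode g TLeaf TLeaf TLeaf"
proof (cases t)
  case (TNode g a b c)
  assume "tarity t = 3"
  then have "tarity a = 1" "tarity b = 1" "tarity c = 1"
    using tarity_ge1[of a] tarity_ge1[of b] tarity_ge1[of c] TNode by auto
  then show ?thesis using TNode tar1 by blast
qed simp

lemma tar5: "tarity t = 5 \<Longrightarrow> t \<in> set T75"
proof (cases t)
  case (TNode g a b c)
  assume t5: "tarity t = 5"
  have s: "tarity a + tarity b + tarity c = 5" using t5 TNode by simp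
  have o: "odd (tarity a)" "odd (tarity b)" "odd (tarity c)" by (rule tarity_odd)+
  have "(tarity a = 3 \<and> tarity b = 1 \<and> tarity c = 1) \<or> (tarity a = 1 \<and> tarity b = 3 \<and> tarity c = 1)
      \<or> (tarity a = 1 \<and> tarity b = 1 \<and> tarity c = 3)"
  proof -
    obtain x y z where "tarity a = 2*x+1" "tarity b = 2*y+1" "tarity c = 2*z+1"
      using o by (meson oddE)
    then show ?thesis using s by auto
  qed
  then show ?thesis
  proof (elim disjE conjE)
    assume "tarity a = 3" "tarity b = 1" "tarity c = 1"
    then obtain h where "a = TNode h TLeaf TLeaf TLeaf" "b = TLeaf" "c = TLeaf" using tar1 tar3 by blast
    then show ?thesis using TNode by (cases g; cases h; simp add: T75_def)
  next
    assume "tarity a = 1" "tarity b = 3" "tarity c = 1"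
    then obtain h where "b = TNode h TLeaf TLeaf TLeaf" "a = TLeaf" "c = TLeaf" using tar1 tar3 by blast
    then show ?thesis using TNode by (cases g; cases h; simp add: T75_def)
  next
    assume "tarity a = 1" "tarity b = 1" "tarity c = 3"
    then obtain h where "c = TNode h TLeaf TLeaf TLeaf" "a = TLeaf" "b = TLeaf" using tar1 tar3 by blast
    then show ?thesis using TNode by (cases g; cases h; simp add: T75_def)
  qed
qed simp

lemma sum_tab: "map h xs = map mset ys \<Longrightarrow> length xs = length ys \<Longrightarrow>
   sum_list (map (\<lambda>t. F t (h t)) xs) = sum_list (map2 (\<lambda>t L. F t (mset L)) xs ys)"
proof (induction xs arbitrary: ys)
  case Nil then show ?case by simp
next
  case (Cons x xs) then show ?case by (cases ys) auto
qed

lemma len_T75: "length T75 = 75" by (simp add: T75_def)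
lemma len_PHL: "length PHL = 75" by (simp add: PHL_def)
lemma distinct_T75: "distinct T75" by (simp add: T75_def)

lemma indep:
  fixes a :: "nat \<Rightarrow> 'k::field_char_0"
  assumes "(\<Sum>i<length (rels33::('k::field_char_0) ft list). smul (a i) (rels33 ! i)) = 0"
  shows "\<forall>i<length (rels33::'k ft list). a i = 0"
proof -
  have E: "(\<Sum>i<33. a i * of_int (sumc (RL!i) s)) = (0::'k)" for s
    using arg_cong[OF assms, of "\<lambda>p. Poly_Mapping.lookup p s"] by (simp add: len_rels lookup_comb)
  have e0: "a 0 = 0" using E[of "TNode W2 (TNode W4 TLeaf TLeaf TLeaf) TLeaf TLeaf"]  by (simp add: RL_def sumc_def lessThan_nat_numeral)
  have e1: "a 1 = 0" using E[of "TNode W2 (TNode W5 TLeaf TLeaf TLeaf) TLeaf TLeaf"] e0 by (simp add: RL_def sumc_def lessThan_nat_numeral)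
  have e2: "a 2 = 0" using E[of "TNode W3 (TNode W4 TLeaf TLeaf TLeaf) TLeaf TLeaf"] e0 e1 by (simp add: RL_def sumc_def lessThan_nat_numeral)
  have e3: "a 3 = 0" using E[of "TNode W3 (TNode W5 TLeaf TLeaf TLeaf) TLeaf TLeaf"] e0 e1 e2 by (simp add: RL_def sumc_def lessThan_nat_numeral)
  have e5: "a 5 = 0" using E[of "TNode W3 TLeaf TLeaf (TNode W5 TLeaf TLeaf TLeaf)"] e0 e1 e2 e3 by (simp add: RL_def sumc_def lessThan_nat_numeral)
  have e6: "a 6 = 0" using E[of "TNode W4 TLeaf (TNode W5 TLeaf TLeaf TLeaf) TLeaf"] e0 e1 e2 e3 e5 by (simp add: RL_def sumc_def lessThan_nat_numeral)
  have e7: "a 7 = 0" using E[of "TNode W1 (TNode W4 TLeaf TLeaf TLeaf) TLeaf TLeaf"] e0 e1 e2 e3 e5 e6 by (simp add: RL_def sumc_def lessThan_nat_numeral)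
  have e4: "a 4 = 0" using E[of "TNode W1 (TNode W1 TLeaf TLeaf TLeaf) TLeaf TLeaf"] e0 e1 e2 e3 e5 e6 e7 by (simp add: RL_def sumc_def lessThan_nat_numeral)
  have e8: "a 8 = 0" using E[of "TNode W3 TLeaf TLeaf (TNode W1 TLeaf TLeaf TLeaf)"] e0 e1 e2 e3 e5 e6 e7 e4 by (simp add: RL_def sumc_def lessThan_nat_numeral)
  have e9: "a 9 = 0" using E[of "TNode W4 TLeaf (TNode W1 TLeaf TLeaf TLeaf) TLeaf"] e0 e1 e2 e3 e5 e6 e7 e4 e8 by (simp add: RL_def sumc_def lessThan_nat_numeral)
  have e10: "a 10 = 0" using E[of "TNode W4 TLeaf TLeaf (TNode W5 TLeaf TLeaf TLeaf)"] e0 e1 e2 e3 e5 e6 e7 e4 e8 e9 by (simp add: RL_def sumc_def lessThan_nat_numeral)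
  have e11: "a 11 = 0" using E[of "TNode W1 TLeaf (TNode W3 TLeaf TLeaf TLeaf) TLeaf"] e0 e1 e2 e3 e5 e6 e7 e4 e8 e9 e10 by (simp add: RL_def sumc_def lessThan_nat_numeral)
  have e12: "a 12 = 0" using E[of "TNode W2 TLeaf (TNode W3 TLeaf TLeaf TLeaf) TLeaf"] e0 e1 e2 e3 e5 e6 e7 e4 e8 e9 e10 e11 by (simp add: RL_def sumc_def lessThan_nat_numeral)
  have e13: "a 13 = 0" using E[of "TNode W5 (TNode W3 TLeaf TLeaf TLeaf) TLeaf TLeaf"] e0 e1 e2 e3 e5 e6 e7 e4 e8 e9 e10 e11 e12 by (simp add: RL_def sumc_def lessThan_nat_numeral)
  have e14: "a 14 = 0" using E[of "TNode W2 (TNode W1 TLeaf TLeaf TLeaf) TLeaf TLeaf"] e0 e1 e2 e3 e5 e6 e7 e4 e8 e9 e10 e11 e12 e13 by (simp add: RL_def sumc_def lessThan_nat_numeral)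
  have e15: "a 15 = 0" using E[of "TNode W2 (TNode W3 TLeaf TLeaf TLeaf) TLeaf TLeaf"] e0 e1 e2 e3 e5 e6 e7 e4 e8 e9 e10 e11 e12 e13 e14 by (simp add: RL_def sumc_def lessThan_nat_numeral)
  have e16: "a 16 = 0" using E[of "TNode W2 TLeaf (TNode W1 TLeaf TLeaf TLeaf) TLeaf"] e0 e1 e2 e3 e5 e6 e7 e4 e8 e9 e10 e11 e12 e13 e14 e15 by (simp add: RL_def sumc_def lessThan_nat_numeral)
  have e17: "a 17 = 0" using E[of "TNode W5 (TNode W1 TLeaf TLeaf TLeaf) TLeaf TLeaf"] e0 e1 e2 e3 e5 e6 e7 e4 e8 e9 e10 e11 e12 e13 e14 e15 e16 by (simp add: RL_def sumc_def lessThan_nat_numeral)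
  have e18: "a 18 = 0" using E[of "TNode W1 TLeaf TLeaf (TNode W3 TLeaf TLeaf TLeaf)"] e0 e1 e2 e3 e5 e6 e7 e4 e8 e9 e10 e11 e12 e13 e14 e15 e16 e17 by (simp add: RL_def sumc_def lessThan_nat_numeral)
  have e19: "a 19 = 0" using E[of "TNode W2 (TNode W2 TLeaf TLeaf TLeaf) TLeaf TLeaf"] e0 e1 e2 e3 e5 e6 e7 e4 e8 e9 e10 e11 e12 e13 e14 e15 e16 e17 e18 by (simp add: RL_def sumc_def lessThan_nat_numeral)
  have e20: "a 20 = 0" using E[of "TNode W2 TLeaf TLeaf (TNode W3 TLeaf TLeaf TLeaf)"] e0 e1 e2 e3 e5 e6 e7 e4 e8 e9 e10 e11 e12 e13 e14 e15 e16 e17 e18 e19 by (simp add: RL_def sumc_def lessThan_nat_numeral)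
  have e21: "a 21 = 0" using E[of "TNode W3 (TNode W3 TLeaf TLeaf TLeaf) TLeaf TLeaf"] e0 e1 e2 e3 e5 e6 e7 e4 e8 e9 e10 e11 e12 e13 e14 e15 e16 e17 e18 e19 e20 by (simp add: RL_def sumc_def lessThan_nat_numeral)
  have e22: "a 22 = 0" using E[of "TNode W3 TLeaf (TNode W3 TLeaf TLeaf TLeaf) TLeaf"] e0 e1 e2 e3 e5 e6 e7 e4 e8 e9 e10 e11 e12 e13 e14 e15 e16 e17 e18 e19 e20 e21 by (simp add: RL_def sumc_def lessThan_nat_numeral)
  have e23: "a 23 = 0" using E[of "TNode W4 (TNode W3 TLeaf TLeaf TLeaf) TLeaf TLeaf"] e0 e1 e2 e3 e5 e6 e7 e4 e8 e9 e10 e11 e12 e13 e14 e15 e16 e17 e18 e19 e20 e21 e22 by (simp add: RL_def sumc_def lessThan_nat_numeral)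
  have e24: "a 24 = 0" using E[of "TNode W4 TLeaf TLeaf (TNode W4 TLeaf TLeaf TLeaf)"] e0 e1 e2 e3 e5 e6 e7 e4 e8 e9 e10 e11 e12 e13 e14 e15 e16 e17 e18 e19 e20 e21 e22 e23 by (simp add: RL_def sumc_def lessThan_nat_numeral)
  have e25: "a 25 = 0" using E[of "TNode W5 TLeaf (TNode W3 TLeaf TLeaf TLeaf) TLeaf"] e0 e1 e2 e3 e5 e6 e7 e4 e8 e9 e10 e11 e12 e13 e14 e15 e16 e17 e18 e19 e20 e21 e22 e23 e24 by (simp add: RL_def sumc_def lessThan_nat_numeral)
  have e26: "a 26 = 0" using E[of "TNode W5 TLeaf TLeaf (TNode W5 TLeaf TLeaf TLeaf)"] e0 e1 e2 e3 e5 e6 e7 e4 e8 e9 e10 e11 e12 e13 e14 e15 e16 e17 e18 e19 e20 e21 e22 e23 e24 e25 by (simp add: RL_def sumc_def lessThan_nat_numeral)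
  have e27: "a 27 = 0" using E[of "TNode W1 (TNode W3 TLeaf TLeaf TLeaf) TLeaf TLeaf"] e0 e1 e2 e3 e5 e6 e7 e4 e8 e9 e10 e11 e12 e13 e14 e15 e16 e17 e18 e19 e20 e21 e22 e23 e24 e25 e26 by (simp add: RL_def sumc_def lessThan_nat_numeral)
  have e28: "a 28 = 0" using E[of "TNode W1 TLeaf (TNode W4 TLeaf TLeaf TLeaf) TLeaf"] e0 e1 e2 e3 e5 e6 e7 e4 e8 e9 e10 e11 e12 e13 e14 e15 e16 e17 e18 e19 e20 e21 e22 e23 e24 e25 e26 e27 by (simp add: RL_def sumc_def lessThan_nat_numeral)
  have e29: "a 29 = 0" using E[of "TNode W3 (TNode W1 TLeaf TLeaf TLeaf) TLeaf TLeaf"] e0 e1 e2 e3 e5 e6 e7 e4 e8 e9 e10 e11 e12 e13 e14 e15 e16 e17 e18 e19 e20 e21 e22 e23 e24 e25 e26 e27 e28 by (simp add: RL_def sumc_def lessThan_nat_numeral)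
  have e30: "a 30 = 0" using E[of "TNode W1 TLeaf (TNode W1 TLeaf TLeaf TLeaf) TLeaf"] e0 e1 e2 e3 e5 e6 e7 e4 e8 e9 e10 e11 e12 e13 e14 e15 e16 e17 e18 e19 e20 e21 e22 e23 e24 e25 e26 e27 e28 e29 by (simp add: RL_def sumc_def lessThan_nat_numeral)
  have e31: "a 31 = 0" using E[of "TNode W3 (TNode W2 TLeaf TLeaf TLeaf) TLeaf TLeaf"] e0 e1 e2 e3 e5 e6 e7 e4 e8 e9 e10 e11 e12 e13 e14 e15 e16 e17 e18 e19 e20 e21 e22 e23 e24 e25 e26 e27 e28 e29 e30 by (simp add: RL_def sumc_def lessThan_nat_numeral)
  have e32: "a 32 = 0" using E[of "TNode W5 TLeaf TLeaf (TNode W4 TLeaf TLeaf TLeaf)"] e0 e1 e2 e3 e5 e6 e7 e4 e8 e9 e10 e11 e12 e13 e14 e15 e16 e17 e18 e19 e20 e21 e22 e23 e24 e25 e26 e27 e28 e29 e30 e31 by (simp add: RL_def sumc_def lessThan_nat_numeral)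
  have "\<forall>i\<in>{..<33}. a i = 0" using e1 by (simp add: lessThan_nat_numeral lessThan_Suc e0 e1 e2 e3 e4 e5 e6 e7 e8 e9 e10 e11 e12 e13 e14 e15 e16 e17 e18 e19 e20 e21 e22 e23 e24 e25 e26 e27 e28 e29 e30 e31 e32)
  then show ?thesis by (auto simp: len_rels)
qed

lemma span:
  assumes c: "c \<in> (ker_d5 :: ('k::field_char_0) ft set)"
  shows "\<exists>a. c = (\<Sum>i<length (rels33::'k ft list). smul (a i) (rels33 ! i))"
proof -
  define a :: "nat \<Rightarrow> 'k" where "a = (\<lambda>i. [Poly_Mapping.lookup c (TNode W2 (TNode W4 TLeaf TLeaf TLeaf) TLeaf TLeaf),
      Poly_Mapping.lookup c (TNode W2 (TNode W5 TLeaf TLeaf TLeaf) TLeaf TLeaf),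
      Poly_Mapping.lookup c (TNode W3 (TNode W4 TLeaf TLeaf TLeaf) TLeaf TLeaf),
      Poly_Mapping.lookup c (TNode W3 (TNode W5 TLeaf TLeaf TLeaf) TLeaf TLeaf),
      Poly_Mapping.lookup c (TNode W1 (TNode W1 TLeaf TLeaf TLeaf) TLeaf TLeaf) - Poly_Mapping.lookup c (TNode W1 (TNode W4 TLeaf TLeaf TLeaf) TLeaf TLeaf),
      - Poly_Mapping.lookup c (TNode W3 TLeaf TLeaf (TNode W5 TLeaf TLeaf TLeaf)),
      - Poly_Mapping.lookup c (TNode W4 TLeaf (TNode W5 TLeaf TLeaf TLeaf) TLeaf),
      Poly_Mapping.lookup c (TNode W1 (TNode W4 TLeaf TLeaf TLeaf) TLeaf TLeaf),
      - Poly_Mapping.lookup c (TNode W3 TLeaf TLeaf (TNode W1 TLeaf TLeaf TLeaf)),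
      - Poly_Mapping.lookup c (TNode W4 TLeaf (TNode W1 TLeaf TLeaf TLeaf) TLeaf),
      - Poly_Mapping.lookup c (TNode W4 TLeaf TLeaf (TNode W5 TLeaf TLeaf TLeaf)),
      Poly_Mapping.lookup c (TNode W1 TLeaf (TNode W3 TLeaf TLeaf TLeaf) TLeaf),
      Poly_Mapping.lookup c (TNode W2 TLeaf (TNode W3 TLeaf TLeaf TLeaf) TLeaf),
      Poly_Mapping.lookup c (TNode W5 (TNode W3 TLeaf TLeaf TLeaf) TLeaf TLeaf),
      Poly_Mapping.lookup c (TNode W2 (TNode W1 TLeaf TLeaf TLeaf) TLeaf TLeaf),
      Poly_Mapping.lookup c (TNode W2 (TNode W3 TLeaf TLeaf TLeaf) TLeaf TLeaf),
      Poly_Mapping.lookup c (TNode W2 TLeaf (TNode W1 TLeaf TLeaf TLeaf) TLeaf),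
      Poly_Mapping.lookup c (TNode W5 (TNode W1 TLeaf TLeaf TLeaf) TLeaf TLeaf),
      - Poly_Mapping.lookup c (TNode W1 TLeaf TLeaf (TNode W3 TLeaf TLeaf TLeaf)),
      Poly_Mapping.lookup c (TNode W2 (TNode W2 TLeaf TLeaf TLeaf) TLeaf TLeaf),
      - Poly_Mapping.lookup c (TNode W2 TLeaf TLeaf (TNode W3 TLeaf TLeaf TLeaf)),
      Poly_Mapping.lookup c (TNode W3 (TNode W3 TLeaf TLeaf TLeaf) TLeaf TLeaf),
      Poly_Mapping.lookup c (TNode W3 TLeaf (TNode W3 TLeaf TLeaf TLeaf) TLeaf),
      Poly_Mapping.lookup c (TNode W4 (TNode W3 TLeaf TLeaf TLeaf) TLeaf TLeaf),
      - Poly_Mapping.lookup c (TNode W4 TLeaf TLeaf (TNode W4 TLeaf TLeaf TLeaf)),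
      - Poly_Mapping.lookup c (TNode W5 TLeaf (TNode W3 TLeaf TLeaf TLeaf) TLeaf),
      - Poly_Mapping.lookup c (TNode W5 TLeaf TLeaf (TNode W5 TLeaf TLeaf TLeaf)),
      Poly_Mapping.lookup c (TNode W1 (TNode W3 TLeaf TLeaf TLeaf) TLeaf TLeaf),
      Poly_Mapping.lookup c (TNode W1 TLeaf (TNode W4 TLeaf TLeaf TLeaf) TLeaf),
      Poly_Mapping.lookup c (TNode W3 (TNode W1 TLeaf TLeaf TLeaf) TLeaf TLeaf),
      Poly_Mapping.lookup c (TNode W1 TLeaf (TNode W1 TLeaf TLeaf TLeaf) TLeaf),
      Poly_Mapping.lookup c (TNode W3 (TNode W2 TLeaf TLeaf TLeaf) TLeaf TLeaf),
      - Poly_Mapping.lookup c (TNode W5 TLeaf TLeaf (TNode W4 TLeaf TLeaf TLeaf))] ! i)"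
  define S where "S = (\<Sum>i<33. smul (a i) ((rels33::'k ft list) ! i))"
  define c' where "c' = c - S"
  have cFT: "c \<in> FT5" and cI: "dlin c \<in> dend_ideal" using c by (auto simp: ker_d5_def)
  have lc': "Poly_Mapping.lookup c' t = Poly_Mapping.lookup c t - (\<Sum>i<33. a i * of_int (sumc (RL!i) t))" for t
    by (simp add: c'_def S_def lookup_minus lookup_comb)
  have out: "Poly_Mapping.lookup c' t = 0" if t: "t \<notin> set T75" for t
  proof -
    have "Poly_Mapping.lookup c t = 0"
    proof (rule ccontr)
      assume "Poly_Mapping.lookup c t \<noteq> 0"
      then have "t \<in> Poly_Mapping.keys c" by (simp add: in_keys_iff)
      then have "tarity t = 5" using cFT by (simp add: FT5_def)
      then show False using tar5 t by blast
    qed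
    moreover have "sumc (RL!i) t = 0" if "i < 33" for i
      using sumc_notin[of t "RL!i"] RL_in_T75'[OF that] t by force
    ultimately show ?thesis by (simp add: lc')
  qed
  have keys': "Poly_Mapping.keys c' \<subseteq> set T75" using out by (auto simp: in_keys_iff)
  have G0: "Lf (\<lambda>t. of_nat (count (phi (dtree t)) w)) c' = (0::'k)" for w
  proof -
    let ?g = "\<lambda>t. of_nat (count (phi (dtree t)) w) :: 'k"
    have "Lf ?g c = 0" using ideal_FF[OF cI, of w] by (simp add: FF_dlin)
    moreover have "Lf ?g ((rels33 :: 'k ft list) ! i) = 0" if "i < 33" for i
    proof -
      from rel_ker[where 'k='k, OF that] have "dlin ((rels33 :: 'k ft list) ! i) \<in> dend_ideal" by (simp add: ker_d5_def)
      from ideal_FF[OF this, of w] show ?thesis by (simp add: FF_dlin)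
    qed
    then have "(\<Sum>i<33. a i * Lf ?g ((rels33 :: 'k ft list) ! i)) = 0" by (intro sum.neutral) auto
    ultimately show "Lf ?g c' = 0" by (simp add: c'_def S_def Lf_diff Lf_sum Lf_smul)
  qed
  have G: "Lf (\<lambda>t. of_nat (count (phi (dtree t)) w)) c' =
      sum_list (map2 (\<lambda>t L. Poly_Mapping.lookup c' t * of_nat (count_list L w)) T75 PHL)" for w
  proof -
    have "Lf (\<lambda>t. of_nat (count (phi (dtree t)) w)) c' =
      (\<Sum>t\<in>set T75. Poly_Mapping.lookup c' t * of_nat (count (phi (dtree t)) w))"
      by (rule Lf_superset[OF _ keys']) simp
    also have "\<dots> = sum_list (map (\<lambda>t. Poly_Mapping.lookup c' t * of_nat (count (phi (dtree t)) w)) T75)"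
      by (simp add: sum.distinct_set_conv_list distinct_T75)
    also have "\<dots> = sum_list (map2 (\<lambda>t L. Poly_Mapping.lookup c' t * of_nat (count (mset L) w)) T75 PHL)"
      by (rule sum_tab[OF PHL_tab]) (simp add: len_T75 len_PHL)
    finally show ?thesis by (simp add: count_mset)
  qed

  have p0: "Poly_Mapping.lookup c' (TNode W2 (TNode W4 TLeaf TLeaf TLeaf) TLeaf TLeaf) = 0" by (simp add: lc' a_def RL_def sumc_def lessThan_nat_numeral)
  have p1: "Poly_Mapping.lookup c' (TNode W2 (TNode W5 TLeaf TLeaf TLeaf) TLeaf TLeaf) = 0" by (simp add: lc' a_def RL_def sumc_def lessThan_nat_numeral)
  have p2: "Poly_Mapping.lookup c' (TNode W3 (TNode W4 TLeaf TLeaf TLeaf) TLeaf TLeaf) = 0" by (simp add: lc' a_def RL_def sumc_def lessThan_nat_numeral)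
  have p3: "Poly_Mapping.lookup c' (TNode W3 (TNode W5 TLeaf TLeaf TLeaf) TLeaf TLeaf) = 0" by (simp add: lc' a_def RL_def sumc_def lessThan_nat_numeral)
  have p4: "Poly_Mapping.lookup c' (TNode W1 (TNode W1 TLeaf TLeaf TLeaf) TLeaf TLeaf) = 0" by (simp add: lc' a_def RL_def sumc_def lessThan_nat_numeral)
  have p5: "Poly_Mapping.lookup c' (TNode W3 TLeaf TLeaf (TNode W5 TLeaf TLeaf TLeaf)) = 0" by (simp add: lc' a_def RL_def sumc_def lessThan_nat_numeral)
  have p6: "Poly_Mapping.lookup c' (TNode W4 TLeaf (TNode W5 TLeaf TLeaf TLeaf) TLeaf) = 0" by (simp add: lc' a_def RL_def sumc_def lessThan_nat_numeral)
  have p7: "Poly_Mapping.lookup c' (TNode W1 (TNode W4 TLeaf TLeaf TLeaf) TLeaf TLeaf) = 0" by (simp add: lc' a_def RL_def sumc_def lessThan_nat_numeral)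
  have p8: "Poly_Mapping.lookup c' (TNode W3 TLeaf TLeaf (TNode W1 TLeaf TLeaf TLeaf)) = 0" by (simp add: lc' a_def RL_def sumc_def lessThan_nat_numeral)
  have p9: "Poly_Mapping.lookup c' (TNode W4 TLeaf (TNode W1 TLeaf TLeaf TLeaf) TLeaf) = 0" by (simp add: lc' a_def RL_def sumc_def lessThan_nat_numeral)
  have p10: "Poly_Mapping.lookup c' (TNode W4 TLeaf TLeaf (TNode W5 TLeaf TLeaf TLeaf)) = 0" by (simp add: lc' a_def RL_def sumc_def lessThan_nat_numeral)
  have p11: "Poly_Mapping.lookup c' (TNode W1 TLeaf (TNode W3 TLeaf TLeaf TLeaf) TLeaf) = 0" by (simp add: lc' a_def RL_def sumc_def lessThan_nat_numeral)
  have p12: "Poly_Mapping.lookup c' (TNode W2 TLeaf (TNode W3 TLeaf TLeaf TLeaf) TLeaf) = 0" by (simp add: lc' a_def RL_def sumc_def lessThan_nat_numeral)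
  have p13: "Poly_Mapping.lookup c' (TNode W5 (TNode W3 TLeaf TLeaf TLeaf) TLeaf TLeaf) = 0" by (simp add: lc' a_def RL_def sumc_def lessThan_nat_numeral)
  have p14: "Poly_Mapping.lookup c' (TNode W2 (TNode W1 TLeaf TLeaf TLeaf) TLeaf TLeaf) = 0" by (simp add: lc' a_def RL_def sumc_def lessThan_nat_numeral)
  have p15: "Poly_Mapping.lookup c' (TNode W2 (TNode W3 TLeaf TLeaf TLeaf) TLeaf TLeaf) = 0" by (simp add: lc' a_def RL_def sumc_def lessThan_nat_numeral)
  have p16: "Poly_Mapping.lookup c' (TNode W2 TLeaf (TNode W1 TLeaf TLeaf TLeaf) TLeaf) = 0" by (simp add: lc' a_def RL_def sumc_def lessThan_nat_numeral)
  have p17: "Poly_Mapping.lookup c' (TNode W5 (TNode W1 TLeaf TLeaf TLeaf) TLeaf TLeaf) = 0" by (simp add: lc' a_def RL_def sumc_def lessThan_nat_numeral)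
  have p18: "Poly_Mapping.lookup c' (TNode W1 TLeaf TLeaf (TNode W3 TLeaf TLeaf TLeaf)) = 0" by (simp add: lc' a_def RL_def sumc_def lessThan_nat_numeral)
  have p19: "Poly_Mapping.lookup c' (TNode W2 (TNode W2 TLeaf TLeaf TLeaf) TLeaf TLeaf) = 0" by (simp add: lc' a_def RL_def sumc_def lessThan_nat_numeral)
  have p20: "Poly_Mapping.lookup c' (TNode W2 TLeaf TLeaf (TNode W3 TLeaf TLeaf TLeaf)) = 0" by (simp add: lc' a_def RL_def sumc_def lessThan_nat_numeral)
  have p21: "Poly_Mapping.lookup c' (TNode W3 (TNode W3 TLeaf TLeaf TLeaf) TLeaf TLeaf) = 0" by (simp add: lc' a_def RL_def sumc_def lessThan_nat_numeral)
  have p22: "Poly_Mapping.lookup c' (TNode W3 TLeaf (TNode W3 TLeaf TLeaf TLeaf) TLeaf) = 0" by (simp add: lc' a_def RL_def sumc_def lessThan_nat_numeral)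
  have p23: "Poly_Mapping.lookup c' (TNode W4 (TNode W3 TLeaf TLeaf TLeaf) TLeaf TLeaf) = 0" by (simp add: lc' a_def RL_def sumc_def lessThan_nat_numeral)
  have p24: "Poly_Mapping.lookup c' (TNode W4 TLeaf TLeaf (TNode W4 TLeaf TLeaf TLeaf)) = 0" by (simp add: lc' a_def RL_def sumc_def lessThan_nat_numeral)
  have p25: "Poly_Mapping.lookup c' (TNode W5 TLeaf (TNode W3 TLeaf TLeaf TLeaf) TLeaf) = 0" by (simp add: lc' a_def RL_def sumc_def lessThan_nat_numeral)
  have p26: "Poly_Mapping.lookup c' (TNode W5 TLeaf TLeaf (TNode W5 TLeaf TLeaf TLeaf)) = 0" by (simp add: lc' a_def RL_def sumc_def lessThan_nat_numeral)
  have p27: "Poly_Mapping.lookup c' (TNode W1 (TNode W3 TLeaf TLeaf TLeaf) TLeaf TLeaf) = 0" by (simp add: lc' a_def RL_def sumc_def lessThan_nat_numeral)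
  have p28: "Poly_Mapping.lookup c' (TNode W1 TLeaf (TNode W4 TLeaf TLeaf TLeaf) TLeaf) = 0" by (simp add: lc' a_def RL_def sumc_def lessThan_nat_numeral)
  have p29: "Poly_Mapping.lookup c' (TNode W3 (TNode W1 TLeaf TLeaf TLeaf) TLeaf TLeaf) = 0" by (simp add: lc' a_def RL_def sumc_def lessThan_nat_numeral)
  have p30: "Poly_Mapping.lookup c' (TNode W1 TLeaf (TNode W1 TLeaf TLeaf TLeaf) TLeaf) = 0" by (simp add: lc' a_def RL_def sumc_def lessThan_nat_numeral)
  have p31: "Poly_Mapping.lookup c' (TNode W3 (TNode W2 TLeaf TLeaf TLeaf) TLeaf TLeaf) = 0" by (simp add: lc' a_def RL_def sumc_def lessThan_nat_numeral)
  have p32: "Poly_Mapping.lookup c' (TNode W5 TLeaf TLeaf (TNode W4 TLeaf TLeaf TLeaf)) = 0" by (simp add: lc' a_def RL_def sumc_def lessThan_nat_numeral)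
  have z0: "Poly_Mapping.lookup c' (TNode W2 TLeaf (TNode W2 TLeaf TLeaf TLeaf) TLeaf) = 0"
    using G0[of "[0,1,2,4,3]"] G[of "[0,1,2,4,3]"] p0 p1 p2 p3 p4 p5 p6 p7 p8 p9 p10 p11 p12 p13 p14 p15 p16 p17 p18 p19 p20 p21 p22 p23 p24 p25 p26 p27 p28 p29 p30 p31 p32  by (simp add: T75_def PHL_def)
  have z1: "Poly_Mapping.lookup c' (TNode W2 TLeaf TLeaf (TNode W2 TLeaf TLeaf TLeaf)) = 0"
    using G0[of "[0,1,2,3,4]"] G[of "[0,1,2,3,4]"] p0 p1 p2 p3 p4 p5 p6 p7 p8 p9 p10 p11 p12 p13 p14 p15 p16 p17 p18 p19 p20 p21 p22 p23 p24 p25 p26 p27 p28 p29 p30 p31 p32 z0 by (simp add: T75_def PHL_def)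
  have z2: "Poly_Mapping.lookup c' (TNode W2 TLeaf TLeaf (TNode W1 TLeaf TLeaf TLeaf)) = 0"
    using G0[of "[0,1,3,2,4]"] G[of "[0,1,3,2,4]"] p0 p1 p2 p3 p4 p5 p6 p7 p8 p9 p10 p11 p12 p13 p14 p15 p16 p17 p18 p19 p20 p21 p22 p23 p24 p25 p26 p27 p28 p29 p30 p31 p32 z0 z1 by (simp add: T75_def PHL_def)
  have z3: "Poly_Mapping.lookup c' (TNode W2 TLeaf TLeaf (TNode W5 TLeaf TLeaf TLeaf)) = 0"
    using G0[of "[0,1,4,2,3]"] G[of "[0,1,4,2,3]"] p0 p1 p2 p3 p4 p5 p6 p7 p8 p9 p10 p11 p12 p13 p14 p15 p16 p17 p18 p19 p20 p21 p22 p23 p24 p25 p26 p27 p28 p29 p30 p31 p32 z0 z1 z2 by (simp add: T75_def PHL_def)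
  have z4: "Poly_Mapping.lookup c' (TNode W2 TLeaf TLeaf (TNode W4 TLeaf TLeaf TLeaf)) = 0"
    using G0[of "[0,1,4,3,2]"] G[of "[0,1,4,3,2]"] p0 p1 p2 p3 p4 p5 p6 p7 p8 p9 p10 p11 p12 p13 p14 p15 p16 p17 p18 p19 p20 p21 p22 p23 p24 p25 p26 p27 p28 p29 p30 p31 p32 z0 z1 z2 z3 by (simp add: T75_def PHL_def)
  have z5: "Poly_Mapping.lookup c' (TNode W3 TLeaf TLeaf (TNode W2 TLeaf TLeaf TLeaf)) = 0"
    using G0[of "[0,2,1,3,4]"] G[of "[0,2,1,3,4]"] p0 p1 p2 p3 p4 p5 p6 p7 p8 p9 p10 p11 p12 p13 p14 p15 p16 p17 p18 p19 p20 p21 p22 p23 p24 p25 p26 p27 p28 p29 p30 p31 p32 z0 z1 z2 z3 z4 by (simp add: T75_def PHL_def)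
  have z6: "Poly_Mapping.lookup c' (TNode W3 TLeaf TLeaf (TNode W3 TLeaf TLeaf TLeaf)) = 0"
    using G0[of "[0,2,1,4,3]"] G[of "[0,2,1,4,3]"] p0 p1 p2 p3 p4 p5 p6 p7 p8 p9 p10 p11 p12 p13 p14 p15 p16 p17 p18 p19 p20 p21 p22 p23 p24 p25 p26 p27 p28 p29 p30 p31 p32 z0 z1 z2 z3 z4 z5 by (simp add: T75_def PHL_def)
  have z7: "Poly_Mapping.lookup c' (TNode W2 TLeaf (TNode W5 TLeaf TLeaf TLeaf) TLeaf) = 0"
    using G0[of "[0,3,1,2,4]"] G[of "[0,3,1,2,4]"] p0 p1 p2 p3 p4 p5 p6 p7 p8 p9 p10 p11 p12 p13 p14 p15 p16 p17 p18 p19 p20 p21 p22 p23 p24 p25 p26 p27 p28 p29 p30 p31 p32 z0 z1 z2 z3 z4 z5 z6 by (simp add: T75_def PHL_def)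
  have z8: "Poly_Mapping.lookup c' (TNode W2 TLeaf (TNode W4 TLeaf TLeaf TLeaf) TLeaf) = 0"
    using G0[of "[0,3,2,1,4]"] G[of "[0,3,2,1,4]"] p0 p1 p2 p3 p4 p5 p6 p7 p8 p9 p10 p11 p12 p13 p14 p15 p16 p17 p18 p19 p20 p21 p22 p23 p24 p25 p26 p27 p28 p29 p30 p31 p32 z0 z1 z2 z3 z4 z5 z6 z7 by (simp add: T75_def PHL_def)
  have z9: "Poly_Mapping.lookup c' (TNode W3 TLeaf (TNode W2 TLeaf TLeaf TLeaf) TLeaf) = 0"
    using G0[of "[0,4,1,2,3]"] G[of "[0,4,1,2,3]"] p0 p1 p2 p3 p4 p5 p6 p7 p8 p9 p10 p11 p12 p13 p14 p15 p16 p17 p18 p19 p20 p21 p22 p23 p24 p25 p26 p27 p28 p29 p30 p31 p32 z0 z1 z2 z3 z4 z5 z6 z7 z8 by (simp add: T75_def PHL_def)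
  have z10: "Poly_Mapping.lookup c' (TNode W3 TLeaf TLeaf (TNode W4 TLeaf TLeaf TLeaf)) = 0"
    using G0[of "[0,4,1,3,2]"] G[of "[0,4,1,3,2]"] p0 p1 p2 p3 p4 p5 p6 p7 p8 p9 p10 p11 p12 p13 p14 p15 p16 p17 p18 p19 p20 p21 p22 p23 p24 p25 p26 p27 p28 p29 p30 p31 p32 z0 z1 z2 z3 z4 z5 z6 z7 z8 z9 by (simp add: T75_def PHL_def)
  have z11: "Poly_Mapping.lookup c' (TNode W3 TLeaf (TNode W1 TLeaf TLeaf TLeaf) TLeaf) = 0"
    using G0[of "[0,4,2,1,3]"] G[of "[0,4,2,1,3]"] p0 p1 p2 p3 p4 p5 p6 p7 p8 p9 p10 p11 p12 p13 p14 p15 p16 p17 p18 p19 p20 p21 p22 p23 p24 p25 p26 p27 p28 p29 p30 p31 p32 z0 z1 z2 z3 z4 z5 z6 z7 z8 z9 z10 by (simp add: T75_def PHL_def)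
  have z12: "Poly_Mapping.lookup c' (TNode W3 TLeaf (TNode W5 TLeaf TLeaf TLeaf) TLeaf) = 0"
    using G0[of "[0,4,3,1,2]"] G[of "[0,4,3,1,2]"] p0 p1 p2 p3 p4 p5 p6 p7 p8 p9 p10 p11 p12 p13 p14 p15 p16 p17 p18 p19 p20 p21 p22 p23 p24 p25 p26 p27 p28 p29 p30 p31 p32 z0 z1 z2 z3 z4 z5 z6 z7 z8 z9 z10 z11 by (simp add: T75_def PHL_def)
  have z13: "Poly_Mapping.lookup c' (TNode W3 TLeaf (TNode W4 TLeaf TLeaf TLeaf) TLeaf) = 0"
    using G0[of "[0,4,3,2,1]"] G[of "[0,4,3,2,1]"] p0 p1 p2 p3 p4 p5 p6 p7 p8 p9 p10 p11 p12 p13 p14 p15 p16 p17 p18 p19 p20 p21 p22 p23 p24 p25 p26 p27 p28 p29 p30 p31 p32 z0 z1 z2 z3 z4 z5 z6 z7 z8 z9 z10 z11 z12 by (simp add: T75_def PHL_def)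
  have z14: "Poly_Mapping.lookup c' (TNode W1 TLeaf (TNode W2 TLeaf TLeaf TLeaf) TLeaf) = 0"
    using G0[of "[1,0,2,4,3]"] G[of "[1,0,2,4,3]"] p0 p1 p2 p3 p4 p5 p6 p7 p8 p9 p10 p11 p12 p13 p14 p15 p16 p17 p18 p19 p20 p21 p22 p23 p24 p25 p26 p27 p28 p29 p30 p31 p32 z0 z1 z2 z3 z4 z5 z6 z7 z8 z9 z10 z11 z12 z13 by (simp add: T75_def PHL_def)
  have z15: "Poly_Mapping.lookup c' (TNode W1 TLeaf TLeaf (TNode W2 TLeaf TLeaf TLeaf)) = 0"
    using G0[of "[1,0,2,3,4]"] G[of "[1,0,2,3,4]"] p0 p1 p2 p3 p4 p5 p6 p7 p8 p9 p10 p11 p12 p13 p14 p15 p16 p17 p18 p19 p20 p21 p22 p23 p24 p25 p26 p27 p28 p29 p30 p31 p32 z0 z1 z2 z3 z4 z5 z6 z7 z8 z9 z10 z11 z12 z13 z14 by (simp add: T75_def PHL_def)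
  have z16: "Poly_Mapping.lookup c' (TNode W1 TLeaf TLeaf (TNode W1 TLeaf TLeaf TLeaf)) = 0"
    using G0[of "[1,0,3,2,4]"] G[of "[1,0,3,2,4]"] p0 p1 p2 p3 p4 p5 p6 p7 p8 p9 p10 p11 p12 p13 p14 p15 p16 p17 p18 p19 p20 p21 p22 p23 p24 p25 p26 p27 p28 p29 p30 p31 p32 z0 z1 z2 z3 z4 z5 z6 z7 z8 z9 z10 z11 z12 z13 z14 z15 by (simp add: T75_def PHL_def)
  have z17: "Poly_Mapping.lookup c' (TNode W1 TLeaf TLeaf (TNode W5 TLeaf TLeaf TLeaf)) = 0"
    using G0[of "[1,0,4,2,3]"] G[of "[1,0,4,2,3]"] p0 p1 p2 p3 p4 p5 p6 p7 p8 p9 p10 p11 p12 p13 p14 p15 p16 p17 p18 p19 p20 p21 p22 p23 p24 p25 p26 p27 p28 p29 p30 p31 p32 z0 z1 z2 z3 z4 z5 z6 z7 z8 z9 z10 z11 z12 z13 z14 z15 z16 by (simp add: T75_def PHL_def)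
  have z18: "Poly_Mapping.lookup c' (TNode W1 TLeaf TLeaf (TNode W4 TLeaf TLeaf TLeaf)) = 0"
    using G0[of "[1,0,4,3,2]"] G[of "[1,0,4,3,2]"] p0 p1 p2 p3 p4 p5 p6 p7 p8 p9 p10 p11 p12 p13 p14 p15 p16 p17 p18 p19 p20 p21 p22 p23 p24 p25 p26 p27 p28 p29 p30 p31 p32 z0 z1 z2 z3 z4 z5 z6 z7 z8 z9 z10 z11 z12 z13 z14 z15 z16 z17 by (simp add: T75_def PHL_def)
  have z19: "Poly_Mapping.lookup c' (TNode W5 TLeaf TLeaf (TNode W2 TLeaf TLeaf TLeaf)) = 0"
    using G0[of "[2,0,1,3,4]"] G[of "[2,0,1,3,4]"] p0 p1 p2 p3 p4 p5 p6 p7 p8 p9 p10 p11 p12 p13 p14 p15 p16 p17 p18 p19 p20 p21 p22 p23 p24 p25 p26 p27 p28 p29 p30 p31 p32 z0 z1 z2 z3 z4 z5 z6 z7 z8 z9 z10 z11 z12 z13 z14 z15 z16 z17 z18 by (simp add: T75_def PHL_def)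
  have z20: "Poly_Mapping.lookup c' (TNode W5 TLeaf TLeaf (TNode W3 TLeaf TLeaf TLeaf)) = 0"
    using G0[of "[2,0,1,4,3]"] G[of "[2,0,1,4,3]"] p0 p1 p2 p3 p4 p5 p6 p7 p8 p9 p10 p11 p12 p13 p14 p15 p16 p17 p18 p19 p20 p21 p22 p23 p24 p25 p26 p27 p28 p29 p30 p31 p32 z0 z1 z2 z3 z4 z5 z6 z7 z8 z9 z10 z11 z12 z13 z14 z15 z16 z17 z18 z19 by (simp add: T75_def PHL_def)
  have z21: "Poly_Mapping.lookup c' (TNode W4 TLeaf TLeaf (TNode W2 TLeaf TLeaf TLeaf)) = 0"
    using G0[of "[2,1,0,3,4]"] G[of "[2,1,0,3,4]"] p0 p1 p2 p3 p4 p5 p6 p7 p8 p9 p10 p11 p12 p13 p14 p15 p16 p17 p18 p19 p20 p21 p22 p23 p24 p25 p26 p27 p28 p29 p30 p31 p32 z0 z1 z2 z3 z4 z5 z6 z7 z8 z9 z10 z11 z12 z13 z14 z15 z16 z17 z18 z19 z20 by (simp add: T75_def PHL_def)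
  have z22: "Poly_Mapping.lookup c' (TNode W4 TLeaf TLeaf (TNode W3 TLeaf TLeaf TLeaf)) = 0"
    using G0[of "[2,1,0,4,3]"] G[of "[2,1,0,4,3]"] p0 p1 p2 p3 p4 p5 p6 p7 p8 p9 p10 p11 p12 p13 p14 p15 p16 p17 p18 p19 p20 p21 p22 p23 p24 p25 p26 p27 p28 p29 p30 p31 p32 z0 z1 z2 z3 z4 z5 z6 z7 z8 z9 z10 z11 z12 z13 z14 z15 z16 z17 z18 z19 z20 z21 by (simp add: T75_def PHL_def)
  have z23: "Poly_Mapping.lookup c' (TNode W5 TLeaf TLeaf (TNode W1 TLeaf TLeaf TLeaf)) = 0"
    using G0[of "[3,0,2,1,4]"] G[of "[3,0,2,1,4]"] p0 p1 p2 p3 p4 p5 p6 p7 p8 p9 p10 p11 p12 p13 p14 p15 p16 p17 p18 p19 p20 p21 p22 p23 p24 p25 p26 p27 p28 p29 p30 p31 p32 z0 z1 z2 z3 z4 z5 z6 z7 z8 z9 z10 z11 z12 z13 z14 z15 z16 z17 z18 z19 z20 z21 z22 by (simp add: T75_def PHL_def)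
  have z24: "Poly_Mapping.lookup c' (TNode W1 (TNode W5 TLeaf TLeaf TLeaf) TLeaf TLeaf) = 0"
    using G0[of "[3,2,0,1,4]"] G[of "[3,2,0,1,4]"] p0 p1 p2 p3 p4 p5 p6 p7 p8 p9 p10 p11 p12 p13 p14 p15 p16 p17 p18 p19 p20 p21 p22 p23 p24 p25 p26 p27 p28 p29 p30 p31 p32 z0 z1 z2 z3 z4 z5 z6 z7 z8 z9 z10 z11 z12 z13 z14 z15 z16 z17 z18 z19 z20 z21 z22 z23 by (simp add: T75_def PHL_def)
  have z25: "Poly_Mapping.lookup c' (TNode W4 TLeaf TLeaf (TNode W1 TLeaf TLeaf TLeaf)) = 0"
    using G0[of "[3,2,1,0,4]"] G[of "[3,2,1,0,4]"] p0 p1 p2 p3 p4 p5 p6 p7 p8 p9 p10 p11 p12 p13 p14 p15 p16 p17 p18 p19 p20 p21 p22 p23 p24 p25 p26 p27 p28 p29 p30 p31 p32 z0 z1 z2 z3 z4 z5 z6 z7 z8 z9 z10 z11 z12 z13 z14 z15 z16 z17 z18 z19 z20 z21 z22 z23 z24 by (simp add: T75_def PHL_def)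
  have z26: "Poly_Mapping.lookup c' (TNode W1 TLeaf (TNode W5 TLeaf TLeaf TLeaf) TLeaf) = 0"
    using G0[of "[3,1,0,2,4]"] G[of "[3,1,0,2,4]"] p0 p1 p2 p3 p4 p5 p6 p7 p8 p9 p10 p11 p12 p13 p14 p15 p16 p17 p18 p19 p20 p21 p22 p23 p24 p25 p26 p27 p28 p29 p30 p31 p32 z0 z1 z2 z3 z4 z5 z6 z7 z8 z9 z10 z11 z12 z13 z14 z15 z16 z17 z18 z19 z20 z21 z22 z23 z24 z25 by (simp add: T75_def PHL_def)
  have z27: "Poly_Mapping.lookup c' (TNode W1 (TNode W2 TLeaf TLeaf TLeaf) TLeaf TLeaf) = 0"
    using G0[of "[3,0,1,2,4]"] G[of "[3,0,1,2,4]"] p0 p1 p2 p3 p4 p5 p6 p7 p8 p9 p10 p11 p12 p13 p14 p15 p16 p17 p18 p19 p20 p21 p22 p23 p24 p25 p26 p27 p28 p29 p30 p31 p32 z0 z1 z2 z3 z4 z5 z6 z7 z8 z9 z10 z11 z12 z13 z14 z15 z16 z17 z18 z19 z20 z21 z22 z23 z24 z25 z26 by (simp add: T75_def PHL_def)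
  have z28: "Poly_Mapping.lookup c' (TNode W5 (TNode W2 TLeaf TLeaf TLeaf) TLeaf TLeaf) = 0"
    using G0[of "[4,0,1,3,2]"] G[of "[4,0,1,3,2]"] p0 p1 p2 p3 p4 p5 p6 p7 p8 p9 p10 p11 p12 p13 p14 p15 p16 p17 p18 p19 p20 p21 p22 p23 p24 p25 p26 p27 p28 p29 p30 p31 p32 z0 z1 z2 z3 z4 z5 z6 z7 z8 z9 z10 z11 z12 z13 z14 z15 z16 z17 z18 z19 z20 z21 z22 z23 z24 z25 z26 z27 by (simp add: T75_def PHL_def)
  have z29: "Poly_Mapping.lookup c' (TNode W5 TLeaf (TNode W2 TLeaf TLeaf TLeaf) TLeaf) = 0"
    using G0[of "[4,0,1,2,3]"] G[of "[4,0,1,2,3]"] p0 p1 p2 p3 p4 p5 p6 p7 p8 p9 p10 p11 p12 p13 p14 p15 p16 p17 p18 p19 p20 p21 p22 p23 p24 p25 p26 p27 p28 p29 p30 p31 p32 z0 z1 z2 z3 z4 z5 z6 z7 z8 z9 z10 z11 z12 z13 z14 z15 z16 z17 z18 z19 z20 z21 z22 z23 z24 z25 z26 z27 z28 by (simp add: T75_def PHL_def)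
  have z30: "Poly_Mapping.lookup c' (TNode W5 TLeaf (TNode W1 TLeaf TLeaf TLeaf) TLeaf) = 0"
    using G0[of "[4,0,2,1,3]"] G[of "[4,0,2,1,3]"] p0 p1 p2 p3 p4 p5 p6 p7 p8 p9 p10 p11 p12 p13 p14 p15 p16 p17 p18 p19 p20 p21 p22 p23 p24 p25 p26 p27 p28 p29 p30 p31 p32 z0 z1 z2 z3 z4 z5 z6 z7 z8 z9 z10 z11 z12 z13 z14 z15 z16 z17 z18 z19 z20 z21 z22 z23 z24 z25 z26 z27 z28 z29 by (simp add: T75_def PHL_def)
  have z31: "Poly_Mapping.lookup c' (TNode W5 TLeaf (TNode W5 TLeaf TLeaf TLeaf) TLeaf) = 0"
    using G0[of "[4,0,3,1,2]"] G[of "[4,0,3,1,2]"] p0 p1 p2 p3 p4 p5 p6 p7 p8 p9 p10 p11 p12 p13 p14 p15 p16 p17 p18 p19 p20 p21 p22 p23 p24 p25 p26 p27 p28 p29 p30 p31 p32 z0 z1 z2 z3 z4 z5 z6 z7 z8 z9 z10 z11 z12 z13 z14 z15 z16 z17 z18 z19 z20 z21 z22 z23 z24 z25 z26 z27 z28 z29 z30 by (simp add: T75_def PHL_def)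
  have z32: "Poly_Mapping.lookup c' (TNode W5 TLeaf (TNode W4 TLeaf TLeaf TLeaf) TLeaf) = 0"
    using G0[of "[4,0,3,2,1]"] G[of "[4,0,3,2,1]"] p0 p1 p2 p3 p4 p5 p6 p7 p8 p9 p10 p11 p12 p13 p14 p15 p16 p17 p18 p19 p20 p21 p22 p23 p24 p25 p26 p27 p28 p29 p30 p31 p32 z0 z1 z2 z3 z4 z5 z6 z7 z8 z9 z10 z11 z12 z13 z14 z15 z16 z17 z18 z19 z20 z21 z22 z23 z24 z25 z26 z27 z28 z29 z30 z31 by (simp add: T75_def PHL_def)
  have z33: "Poly_Mapping.lookup c' (TNode W4 TLeaf (TNode W2 TLeaf TLeaf TLeaf) TLeaf) = 0"
    using G0[of "[4,1,0,2,3]"] G[of "[4,1,0,2,3]"] p0 p1 p2 p3 p4 p5 p6 p7 p8 p9 p10 p11 p12 p13 p14 p15 p16 p17 p18 p19 p20 p21 p22 p23 p24 p25 p26 p27 p28 p29 p30 p31 p32 z0 z1 z2 z3 z4 z5 z6 z7 z8 z9 z10 z11 z12 z13 z14 z15 z16 z17 z18 z19 z20 z21 z22 z23 z24 z25 z26 z27 z28 z29 z30 z31 z32 by (simp add: T75_def PHL_def)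
  have z34: "Poly_Mapping.lookup c' (TNode W4 TLeaf (TNode W3 TLeaf TLeaf TLeaf) TLeaf) = 0"
    using G0[of "[4,1,0,3,2]"] G[of "[4,1,0,3,2]"] p0 p1 p2 p3 p4 p5 p6 p7 p8 p9 p10 p11 p12 p13 p14 p15 p16 p17 p18 p19 p20 p21 p22 p23 p24 p25 p26 p27 p28 p29 p30 p31 p32 z0 z1 z2 z3 z4 z5 z6 z7 z8 z9 z10 z11 z12 z13 z14 z15 z16 z17 z18 z19 z20 z21 z22 z23 z24 z25 z26 z27 z28 z29 z30 z31 z32 z33 by (simp add: T75_def PHL_def)
  have z35: "Poly_Mapping.lookup c' (TNode W5 (TNode W5 TLeaf TLeaf TLeaf) TLeaf TLeaf) = 0"
    using G0[of "[4,2,0,1,3]"] G[of "[4,2,0,1,3]"] p0 p1 p2 p3 p4 p5 p6 p7 p8 p9 p10 p11 p12 p13 p14 p15 p16 p17 p18 p19 p20 p21 p22 p23 p24 p25 p26 p27 p28 p29 p30 p31 p32 z0 z1 z2 z3 z4 z5 z6 z7 z8 z9 z10 z11 z12 z13 z14 z15 z16 z17 z18 z19 z20 z21 z22 z23 z24 z25 z26 z27 z28 z29 z30 z31 z32 z33 z34 by (simp add: T75_def PHL_def)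
  have z36: "Poly_Mapping.lookup c' (TNode W5 (TNode W4 TLeaf TLeaf TLeaf) TLeaf TLeaf) = 0"
    using G0[of "[4,2,1,0,3]"] G[of "[4,2,1,0,3]"] p0 p1 p2 p3 p4 p5 p6 p7 p8 p9 p10 p11 p12 p13 p14 p15 p16 p17 p18 p19 p20 p21 p22 p23 p24 p25 p26 p27 p28 p29 p30 p31 p32 z0 z1 z2 z3 z4 z5 z6 z7 z8 z9 z10 z11 z12 z13 z14 z15 z16 z17 z18 z19 z20 z21 z22 z23 z24 z25 z26 z27 z28 z29 z30 z31 z32 z33 z34 z35 by (simp add: T75_def PHL_def)
  have z37: "Poly_Mapping.lookup c' (TNode W4 (TNode W2 TLeaf TLeaf TLeaf) TLeaf TLeaf) = 0"
    using G0[of "[4,3,0,1,2]"] G[of "[4,3,0,1,2]"] p0 p1 p2 p3 p4 p5 p6 p7 p8 p9 p10 p11 p12 p13 p14 p15 p16 p17 p18 p19 p20 p21 p22 p23 p24 p25 p26 p27 p28 p29 p30 p31 p32 z0 z1 z2 z3 z4 z5 z6 z7 z8 z9 z10 z11 z12 z13 z14 z15 z16 z17 z18 z19 z20 z21 z22 z23 z24 z25 z26 z27 z28 z29 z30 z31 z32 z33 z34 z35 z36 by (simp add: T75_def PHL_def)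
  have z38: "Poly_Mapping.lookup c' (TNode W4 TLeaf (TNode W4 TLeaf TLeaf TLeaf) TLeaf) = 0"
    using G0[of "[4,3,0,2,1]"] G[of "[4,3,0,2,1]"] p0 p1 p2 p3 p4 p5 p6 p7 p8 p9 p10 p11 p12 p13 p14 p15 p16 p17 p18 p19 p20 p21 p22 p23 p24 p25 p26 p27 p28 p29 p30 p31 p32 z0 z1 z2 z3 z4 z5 z6 z7 z8 z9 z10 z11 z12 z13 z14 z15 z16 z17 z18 z19 z20 z21 z22 z23 z24 z25 z26 z27 z28 z29 z30 z31 z32 z33 z34 z35 z36 z37 by (simp add: T75_def PHL_def)
  have z39: "Poly_Mapping.lookup c' (TNode W4 (TNode W1 TLeaf TLeaf TLeaf) TLeaf TLeaf) = 0"
    using G0[of "[4,3,1,0,2]"] G[of "[4,3,1,0,2]"] p0 p1 p2 p3 p4 p5 p6 p7 p8 p9 p10 p11 p12 p13 p14 p15 p16 p17 p18 p19 p20 p21 p22 p23 p24 p25 p26 p27 p28 p29 p30 p31 p32 z0 z1 z2 z3 z4 z5 z6 z7 z8 z9 z10 z11 z12 z13 z14 z15 z16 z17 z18 z19 z20 z21 z22 z23 z24 z25 z26 z27 z28 z29 z30 z31 z32 z33 z34 z35 z36 z37 z38 by (simp add: T75_def PHL_def)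
  have z40: "Poly_Mapping.lookup c' (TNode W4 (TNode W5 TLeaf TLeaf TLeaf) TLeaf TLeaf) = 0"
    using G0[of "[4,3,2,0,1]"] G[of "[4,3,2,0,1]"] p0 p1 p2 p3 p4 p5 p6 p7 p8 p9 p10 p11 p12 p13 p14 p15 p16 p17 p18 p19 p20 p21 p22 p23 p24 p25 p26 p27 p28 p29 p30 p31 p32 z0 z1 z2 z3 z4 z5 z6 z7 z8 z9 z10 z11 z12 z13 z14 z15 z16 z17 z18 z19 z20 z21 z22 z23 z24 z25 z26 z27 z28 z29 z30 z31 z32 z33 z34 z35 z36 z37 z38 z39 by (simp add: T75_def PHL_def)
  have z41: "Poly_Mapping.lookup c' (TNode W4 (TNode W4 TLeaf TLeaf TLeaf) TLeaf TLeaf) = 0"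
    using G0[of "[4,3,2,1,0]"] G[of "[4,3,2,1,0]"] p0 p1 p2 p3 p4 p5 p6 p7 p8 p9 p10 p11 p12 p13 p14 p15 p16 p17 p18 p19 p20 p21 p22 p23 p24 p25 p26 p27 p28 p29 p30 p31 p32 z0 z1 z2 z3 z4 z5 z6 z7 z8 z9 z10 z11 z12 z13 z14 z15 z16 z17 z18 z19 z20 z21 z22 z23 z24 z25 z26 z27 z28 z29 z30 z31 z32 z33 z34 z35 z36 z37 z38 z39 z40 by (simp add: T75_def PHL_def)
  have "Poly_Mapping.lookup c' t = 0" for t
  proof (cases "t \<in> set T75")
    case True then show ?thesis using p0 p1 p2 p3 p4 p5 p6 p7 p8 p9 p10 p11 p12 p13 p14 p15 p16 p17 p18 p19 p20 p21 p22 p23 p24 p25 p26 p27 p28 p29 p30 p31 p32 z0 z1 z2 z3 z4 z5 z6 z7 z8 z9 z10 z11 z12 z13 z14 z15 z16 z17 z18 z19 z20 z21 z22 z23 z24 z25 z26 z27 z28 z29 z30 z31 z32 z33 z34 z35 z36 z37 z38 z39 z40 z41 by (simp add: T75_def) (elim disjE; simp)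
  next
    case False then show ?thesis by (rule out)
  qed
  then have "c' = 0" by (intro poly_mapping_eqI) simp
  then have "c = S" by (simp add: c'_def)
  then show ?thesis by (intro exI[of _ a]) (simp add: S_def len_rels)
qed

theorem theorem5p1:
  shows "length (rels33 :: ('k::field_char_0) ft list) = 33
    \<and> (\<forall>i < length (rels33 :: 'k ft list). rels33 ! i \<in> ker_d5)
    \<and> (\<forall>a :: nat \<Rightarrow> 'k.
          (\<Sum>i < length (rels33 :: 'k ft list). smul (a i) (rels33 ! i)) = 0
          \<longrightarrow> (\<forall>i < length (rels33 :: 'k ft list). a i = 0))
    \<and> (\<forall>c \<in> (ker_d5 :: 'k ft set). \<exists>a :: nat \<Rightarrow> 'k.
          c = (\<Sum>i < length (rels33 :: 'k ft list). smul (a i) (rels33 ! i)))"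
    apply (intro conjI)
     apply (rule len_rels)
    apply (intro allI impI)
    apply (rule rel_ker)
    apply (simp add: len_rels)
   apply (rule allI, rule impI, erule indep)
  apply (rule ballI, erule span)
  done

end
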